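(* Let $\lambda,\mu\ge 0$ be real, $w$ a positive integer, and $$D_w(p)=(1-\lambda^2p^2)(1-\mu^2p^2)-(\lambda^2-p^2)(\mu^2-p^2)p^{2w}.$$ Zeros of $D_w$ of the form $p=e^{it}$ with $t$ real arise from solutions $t\in[0,2\pi)$ of $$\tan wt=\frac{\left(\frac{\lambda^2-1}{\lambda^2+1}+\frac{\mu^2-1}{\mu^2+1}\right)\tan t}{\left(\frac{\lambda^2-1}{\lambda^2+1}\right)\left(\frac{\mu^2-1}{\mu^2+1}\right)-\tan^2 t}.\qquad(\ast)$$ Additionally, if $\lambda=1$ or $\mu=1$ then $D_w(\pm1)=0$, and if $\lambda=\mu=1$ then $p=\pm1$ are triple zeros of $D_w$. Moreover, for $w$ sufficiently large, the numbers of solutions of $(\ast)$ in $[0,2\pi)$ and the numbers of zeros of $D_w$ (counted with multiplicity) are as follows: (1) if $\lambda<1$ and $\mu<1$: $(\ast)$ has $2w+4$ solutions and $D_w$ has $2w+4$ zeros on the unit circle; (2) if $\lambda<1,\mu=1$, or $\lambda=1,\mu<1$: $(\ast)$ has $2w+2$ solutions and $D_w$ has $2w+4$ zeros on the unit circle; (3) if $\lambda=\mu=1$: $(\ast)$ has $2w$ solutions and $D_w$ has $2w+4$ zeros on the unit circle; (4) if $\lambda>1,\mu<1$, or $\lambda<1,\mu>1$: $(\ast)$ has $2w$ solutions, and $D_w$ has $2w$ zeros on the unit circle and $4$ zeros on the real line; (5) if $\lambda>1,\mu=1$, or $\lambda=1,\mu>1$: $(\ast)$ has $2w-2$ solutions,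 and $D_w$ has $2w$ zeros on the unit circle and $4$ zeros on the real line; (6) if $\lambda>1$ and $\mu>1$: $(\ast)$ has $2w-4$ solutions, and $D_w$ has $2w-4$ zeros on the unit circle and $8$ zeros on the real line. Thus $D_w$ has $(2w+4)-4\sigma$ zeros on the unit circle for some $\sigma\in\{0,1,2\}$ depending on $\lambda,\mu$, and its other $4\sigma$ zeros lie on the real line; if $p$ is a real zero then so are $-p$, $1/p$ and $-1/p$.
   Context: $D_w(p)$ is the denominator polynomial of the generating function of loops (directed paths with steps $(1,\pm1)$ starting and ending on $y=0$, confined to $0\le y\le w$), with bottom-wall weight $a=1+\lambda^2$ and top-wall weight $b=1+\mu^2$. *)

theory Defs
  imports "HOL-Analysis.Analysis" "HOL-Computational_Algebra.Polynomial"
begin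

definition Dw :: "real \<Rightarrow> real \<Rightarrow> nat \<Rightarrow> complex poly" where
  "Dw lam mu w =
     [:1, 0, - complex_of_real (lam^2):] * [:1, 0, - complex_of_real (mu^2):]
     - [:complex_of_real (lam^2), 0, -1:] * [:complex_of_real (mu^2), 0, -1:] * monom 1 (2*w)"

definition cst :: "real \<Rightarrow> real" where
  "cst lam = (lam^2 - 1) / (lam^2 + 1)"

text \<open>t solves (*):  tan(w t) = (a+b) tan t / (a b - tan^2 t), a = cst lam, b = cst mu.
  Both sides are read as values in the projective line R \<union> {\<infinity>}, i.e.
  tan x = [sin x : cos x], and the right-hand side is the rational function of tan t
  in lowest terms, written homogeneously in (sin t, cos t):
  - if a+b = 0 the rational function is identically 0, so (*) reads tan(wt) = 0;
  - if a+b \<noteq> 0 and a b = 0 the common factor tan t cancels, leaving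
    tan(wt) = -(a+b)/tan t;
  - otherwise numerator (a+b) s c and denominator a b c^2 - s^2 are coprime.
  Equality of projective points [x0:x1] = [y0:y1] is x0 y1 = x1 y0.\<close>
definition star_sol :: "real \<Rightarrow> real \<Rightarrow> nat \<Rightarrow> real \<Rightarrow> bool" where
  "star_sol lam mu w t =
     (let a = cst lam; b = cst mu; s = sin t; c = cos t;
          sw = sin (real w * t); cw = cos (real w * t) in
      if a + b = 0 then sw = 0
      else if a * b = 0 then sw * (- s) = cw * ((a + b) * c)
      else sw * (a * b * c^2 - s^2) = cw * ((a + b) * s * c))"

definition nsol :: "real \<Rightarrow> real \<Rightarrow> nat \<Rightarrow> nat" where
  "nsol lam mu w = card {t. 0 \<le> t \<and> t < 2 * pi \<and> star_sol lam mu w t}"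

definition circle_zeros :: "complex poly \<Rightarrow> nat" where
  "circle_zeros P = (\<Sum>z \<in> {z. poly P z = 0 \<and> cmod z = 1}. order z P)"

definition real_zeros :: "complex poly \<Rightarrow> nat" where
  "real_zeros P = (\<Sum>z \<in> {z. poly P z = 0 \<and> Im z = 0 \<and> cmod z \<noteq> 1}. order z P)"

end

theory Submission
  imports Defs
begin



lemma poly_Dw: "poly (Dw lam mu w) z =
  (1 - of_real (lam^2) * z^2) * (1 - of_real (mu^2) * z^2)
  - (of_real (lam^2) - z^2) * (of_real (mu^2) - z^2) * z^(2*w)"
  by (simp add: Dw_def poly_monom algebra_simps power2_eq_square)

lemma Dw_nz: "w \<ge> 1 \<Longrightarrow> Dw lam mu w \<noteq> 0"
proof
  assume "w \<ge> 1" "Dw lam mu w = 0"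
  hence "poly (Dw lam mu w) 0 = 0" by simp
  thus False using \<open>w \<ge> 1\<close> by (simp add: poly_Dw zero_power)
qed

lemma Dw_deg: "degree (Dw lam mu w) \<le> 2*w+4"
proof -
  have a: "degree ([:1, 0, - complex_of_real (lam^2):] * [:1, 0, - complex_of_real (mu^2):]) \<le> 2*w+4"
    by (rule order.trans[OF degree_mult_le]) simp
  have b: "degree ([:complex_of_real (lam^2), 0, -1:] * [:complex_of_real (mu^2), 0, -1:] * monom (1::complex) (2*w)) \<le> 2*w+4"
    by (rule order.trans[OF degree_mult_le]) (rule order.trans[OF add_mono[OF degree_mult_le degree_monom_le]], simp)
  show ?thesis unfolding Dw_def
    by (rule order.trans[OF degree_diff_le_max]) (use a b in simp)
qed

lemma Dw_sym: "Dw lam mu w = Dw mu lam w"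
  unfolding Dw_def by (simp add: mult.commute mult.left_commute)

lemma circ_factor1:
  fixes L c s :: real
  assumes "c^2 + s^2 = 1"
  shows "1 - of_real L * (Complex c s)^2 = - Complex c s * Complex ((L-1)* c) ((L+1)* s)"
    and "of_real L - (Complex c s)^2 = Complex c s * Complex ((L-1)* c) (-(L+1)* s)"
proof -
  have e: "c * c = 1 - s * s" using assms by (simp add: power2_eq_square)
  show "1 - of_real L * (Complex c s)^2 = - Complex c s * Complex ((L-1) * c) ((L+1) * s)"
    by (simp add: complex_eq_iff power2_eq_square algebra_simps e)
  show "of_real L - (Complex c s)^2 = Complex c s * Complex ((L-1) * c) (-(L+1) * s)"
    by (simp add: complex_eq_iff power2_eq_square algebra_simps e)
qed

lemma circ_formula:
  fixes L M t :: real and w :: nat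
  defines "c \<equiv> cos t" and "s \<equiv> sin t" and "C \<equiv> cos (w*t)" and "S \<equiv> sin (w*t)"
  defines "XX \<equiv> (L-1)*(M-1)* c^2 - (L+1)*(M+1)* s^2"
      and "YY \<equiv> ((L-1)*(M+1) + (L+1)*(M-1))* s* c"
  shows "(1 - of_real L * (cis t)^2) * (1 - of_real M * (cis t)^2)
     - (of_real L - (cis t)^2) * (of_real M - (cis t)^2) * (cis t)^(2*w)
     = 2 * \<i> * (cis t)^2 * cis (w*t) * of_real (YY*C - XX*S)"
proof -
  have cs: "c^2 + s^2 = 1" by (simp add: c_def s_def)
  have CS: "C^2 + S^2 = 1" by (simp add: C_def S_def)
  have u: "cis t = Complex c s" by (simp add: cis.ctr c_def s_def)
  have v: "cis t ^ (2*w) = (Complex C S)^2"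
  proof -
    have "cis t ^ (2*w) = (cis t ^ w)^2" by (simp add: power_mult mult.commute)
    also have "\<dots> = (cis (w*t))^2" by (simp only: Complex.DeMoivre)
    finally show ?thesis by (simp add: cis.ctr C_def S_def)
  qed
  have v': "Complex c s ^ (2*w) = (Complex C S)^2" using v u by simp
  have v2: "cis (w*t) = Complex C S" by (simp add: cis.ctr C_def S_def)
  have "(1 - of_real L * (cis t)^2) * (1 - of_real M * (cis t)^2)
     - (of_real L - (cis t)^2) * (of_real M - (cis t)^2) * (cis t)^(2*w)
     = (Complex c s)^2 * (Complex ((L-1)* c) ((L+1)* s) * Complex ((M-1)* c) ((M+1)* s)
        - Complex ((L-1)* c) (-(L+1)* s) * Complex ((M-1)* c) (-(M+1)* s) * (Complex C S)^2)"
    unfolding u v' circ_factor1[OF cs] by (simp add: algebra_simps power2_eq_square)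
  also have "\<dots> = 2 * \<i> * (Complex c s)^2 * Complex C S * of_real (YY*C - XX*S)"
  proof -
    have h1: "Complex ((L-1)*c) ((L+1)* s) * Complex ((M-1)*c) ((M+1)* s) = of_real XX + \<i> * of_real YY"
      unfolding XX_def YY_def by (simp add: complex_eq_iff power2_eq_square algebra_simps)
    have h2: "Complex ((L-1)*c) (-(L+1)* s) * Complex ((M-1)*c) (-(M+1)* s) = of_real XX - \<i> * of_real YY"
      unfolding XX_def YY_def by (simp add: complex_eq_iff power2_eq_square algebra_simps)
    have h3: "Complex C S = of_real C + \<i> * of_real S" by (simp add: complex_eq_iff)
    have CS': "(of_real C :: complex)^2 + (of_real S)^2 = 1"
      using CS by (metis of_real_1 of_real_add of_real_power)
    have ii: "\<i>*\<i> = (-1::complex)" by simp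
    have "(of_real XX + \<i> * of_real YY) - (of_real XX - \<i> * of_real YY) * (of_real C + \<i> * of_real S)^2
       = 2 * \<i> * (of_real C + \<i> * of_real S) * (of_real YY * of_real C - of_real XX * of_real S)"
      using CS' ii by algebra
    hence E2: "(of_real XX + \<i> * of_real YY) - (of_real XX - \<i> * of_real YY) * (of_real C + \<i> * of_real S)^2
       = 2 * \<i> * (of_real C + \<i> * of_real S) * of_real (YY*C - XX*S)" by simp
    show ?thesis unfolding h1 h2 h3 E2 by (simp add: mult_ac)
  qed
  finally show ?thesis by (simp add: u v2)
qed



lemma count_sin_zeros:
  fixes g :: "real \<Rightarrow> real" and N :: nat
  assumes cont: "continuous_on {0..2*pi} g"
    and mono: "\<And>x y. 0 \<le> x \<Longrightarrow> x < y \<Longrightarrow> y \<le> 2*pi \<Longrightarrow> g x < g y"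
    and fin: "g (2*pi) = g 0 + N * pi"
  shows "card {t. 0 \<le> t \<and> t < 2*pi \<and> sin (g t) = 0} = N"
proof -
  define S where "S = {t. 0 \<le> t \<and> t < 2*pi \<and> sin (g t) = 0}"
  define K where "K = {k::int. g 0 \<le> k * pi \<and> k * pi < g 0 + N * pi}"
  define f where "f t = \<lfloor>g t / pi\<rfloor>" for t
  have mono': "g x \<le> g y" if "0 \<le> x" "x \<le> y" "y \<le> 2*pi" for x y
    using mono[of x y] that by (cases "x = y") auto
  have fS: "g t = f t * pi" if "t \<in> S" for t
  proof -
    from that have "sin (g t) = 0" by (simp add: S_def)
    then obtain i :: int where i: "g t = i * pi" by (auto simp: sin_zero_iff_int2)
    hence "f t = i" by (simp add: f_def)
    thus ?thesis using i by simp
  qed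
  have bij: "bij_betw f S K"
  proof (rule bij_betw_imageI)
    show "inj_on f S"
    proof (rule inj_onI)
      fix x y assume xy: "x \<in> S" "y \<in> S" "f x = f y"
      hence e: "g x = g y" using fS by simp
      show "x = y"
      proof (rule ccontr)
        assume "x \<noteq> y"
        hence "x < y \<or> y < x" by auto
        thus False using mono[of x y] mono[of y x] xy e by (auto simp: S_def)
      qed
    qed
    show "f ` S = K"
    proof
      show "f ` S \<subseteq> K"
      proof
        fix k assume "k \<in> f ` S"
        then obtain t where t: "t \<in> S" "k = f t" by auto
        have "g 0 \<le> g t" using mono' t by (auto simp: S_def)
        moreover have "g t < g (2*pi)" using mono t by (auto simp: S_def)
        ultimately show "k \<in> K" using fS[OF t(1)] t fin by (simp add: K_def)
      qed
      show "K \<subseteq> f ` S"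
      proof
        fix k assume k: "k \<in> K"
        have "\<exists>x. 0 \<le> x \<and> x \<le> 2*pi \<and> g x = k * pi"
          by (rule IVT') (use k fin cont in \<open>auto simp: K_def\<close>)
        then obtain x where x: "0 \<le> x" "x \<le> 2*pi" "g x = k * pi" by auto
        have "x \<noteq> 2*pi" using x k fin by (auto simp: K_def)
        hence "x \<in> S" using x by (auto simp: S_def sin_zero_iff_int2)
        moreover have "f x = k" using x by (simp add: f_def)
        ultimately show "k \<in> f ` S" by force
      qed
    qed
  qed
  have "K = {\<lceil>g 0 / pi\<rceil> ..< \<lceil>g 0 / pi\<rceil> + int N}"
  proof -
    have *: "k \<in> K \<longleftrightarrow> \<lceil>g 0 / pi\<rceil> \<le> k \<and> k - int N < \<lceil>g 0 / pi\<rceil>" for k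
    proof -
      have "k \<in> K \<longleftrightarrow> g 0 / pi \<le> k \<and> k - real N < g 0 / pi"
        unfolding K_def by (auto simp: field_simps)
      thus ?thesis by (simp add: ceiling_le_iff less_ceiling_iff)
    qed
    show ?thesis
    proof (rule set_eqI)
      fix k
      show "k \<in> K \<longleftrightarrow> k \<in> {\<lceil>g 0 / pi\<rceil> ..< \<lceil>g 0 / pi\<rceil> + int N}"
        unfolding * atLeastLessThan_iff by linarith
    qed
  qed
  hence "card K = N" by simp
  thus ?thesis using bij_betw_same_card[OF bij] S_def by simp
qed


definition Dn :: "real \<Rightarrow> real \<Rightarrow> real" where "Dn a t = a * (cos t)^2 + (sin t)^2"
definition qf :: "real \<Rightarrow> real \<Rightarrow> real" where "qf a t = (1-a) * sin t * cos t / Dn a t"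
definition Th :: "real \<Rightarrow> real \<Rightarrow> real" where "Th a t = t + arctan (qf a t)"

lemma Dn_bounds: assumes "0 < a" "a \<le> 1" shows "a \<le> Dn a t" "Dn a t \<le> 1"
proof -
  have cs: "(cos t)^2 + (sin t)^2 = 1" by simp
  have "a * (sin t)^2 \<le> (sin t)^2" using assms by (intro mult_left_le_one_le) auto
  hence "a * (cos t)^2 + a * (sin t)^2 \<le> a * (cos t)^2 + (sin t)^2" by simp
  thus "a \<le> Dn a t" unfolding Dn_def using cs by (metis distrib_left mult.right_neutral)
  have "a * (cos t)^2 \<le> (cos t)^2" using assms by (intro mult_left_le_one_le) auto
  thus "Dn a t \<le> 1" unfolding Dn_def using cs by linarith
qed

lemma Th_polar:
  assumes "0 < a" "a \<le> 1"
  shows "\<exists>\<rho>>0. Complex (a * cos t) (sin t) = of_real \<rho> * cis (Th a t)"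
proof -
  define D where "D = Dn a t"
  define q where "q = qf a t"
  have D0: "D > 0" using Dn_bounds[OF assms, of t] assms unfolding D_def by linarith
  have qD: "q * D = (1-a) * sin t * cos t" using D0 unfolding q_def qf_def D_def by simp
  define r where "r = sqrt (1 + q^2)"
  have r0: "r > 0" unfolding r_def by (simp add: add_pos_nonneg)
  have ca: "cis (arctan q) = of_real (1/r) * Complex 1 q"
    by (simp add: complex_eq_iff cis.sel cos_arctan sin_arctan r_def)
  have "cis (Th a t) = cis t * cis (arctan q)" unfolding Th_def q_def by (simp add: cis_mult)
  hence "of_real (D * r) * cis (Th a t) = of_real D * (Complex (cos t) (sin t) * Complex 1 q)"
    using r0 unfolding ca by (simp add: cis.ctr field_simps)
  also have "\<dots> = Complex (a * cos t) (sin t)"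
  proof -
    have cs: "(cos t)^2 + (sin t)^2 = 1" by simp
    have e1: "D * cos t - sin t * ((1-a) * sin t * cos t) = a * cos t"
      unfolding D_def Dn_def using cs by algebra
    have e2: "D * sin t + cos t * ((1-a) * sin t * cos t) = sin t"
      unfolding D_def Dn_def using cs by algebra
    show ?thesis using e1 e2 unfolding qD[symmetric] by (simp add: complex_eq_iff algebra_simps)
  qed
  finally show ?thesis using D0 r0 by (intro exI[of _ "D * r"]) auto
qed


lemma Dn_deriv: "(Dn a has_real_derivative 2 * (1-a) * sin t * cos t) (at t)"
  unfolding Dn_def
  by (auto intro!: derivative_eq_intros simp: algebra_simps power2_eq_square)

lemma qf_deriv:
  assumes "Dn a t \<noteq> 0"
  shows "(qf a has_real_derivative
     (1-a) * ((cos t * cos t - sin t * sin t) * Dn a t - sin t * cos t * (2 * (1-a) * sin t * cos t)) / (Dn a t)^2) (at t)"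
proof -
  have 1: "((\<lambda>t. (1-a) * sin t * cos t) has_real_derivative (1-a) * (cos t * cos t - sin t * sin t)) (at t)"
    by (auto intro!: derivative_eq_intros simp: algebra_simps)
  have "((\<lambda>t. (1-a) * sin t * cos t / Dn a t) has_real_derivative
     ((1-a) * (cos t * cos t - sin t * sin t) * Dn a t - (1-a) * sin t * cos t * (2 * (1-a) * sin t * cos t)) / (Dn a t * Dn a t)) (at t)"
    by (rule DERIV_divide[OF 1 Dn_deriv assms])
  thus ?thesis unfolding qf_def[abs_def] by (simp add: algebra_simps power2_eq_square)
qed

lemma qd_bound:
  assumes "0 < a" "a \<le> 1"
  shows "\<bar>(1-a) * ((cos t * cos t - sin t * sin t) * Dn a t - sin t * cos t * (2 * (1-a) * sin t * cos t)) / (Dn a t)^2\<bar> \<le> 3 / a^2"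
proof -
  define D where "D = Dn a t"
  have D: "a \<le> D" "D \<le> 1" using Dn_bounds[OF assms] D_def by auto
  have cs1: "cos t * cos t + sin t * sin t = 1" by (rule sin_cos_squared_add3)
  have c2: "cos t * cos t \<le> 1" "0 \<le> cos t * cos t" "sin t * sin t \<le> 1" "0 \<le> sin t * sin t"
    using cs1 zero_le_square[of "cos t"] zero_le_square[of "sin t"] by linarith+
  have n1: "\<bar>cos t * cos t - sin t * sin t\<bar> \<le> 1" using c2 by linarith
  have D0: "0 \<le> D" using D assms by linarith
  have n2: "\<bar>(cos t * cos t - sin t * sin t) * D\<bar> \<le> 1"
  proof -
    have "\<bar>cos t * cos t - sin t * sin t\<bar> * D \<le> 1" by (rule mult_le_one[OF n1 D0 D(2)])
    thus ?thesis using D0 by (simp add: abs_mult)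
  qed
  have sce: "(sin t * cos t) * (sin t * cos t) = (sin t * sin t) * (cos t * cos t)" by (simp add: algebra_simps)
  have sc: "(sin t * cos t) * (sin t * cos t) \<le> 1" "0 \<le> (sin t * cos t) * (sin t * cos t)"
    unfolding sce using mult_le_one[OF c2(3) c2(2) c2(1)] c2 by simp_all
  have n3: "\<bar>sin t * cos t * (2 * (1-a) * sin t * cos t)\<bar> \<le> 2"
  proof -
    have e: "sin t * cos t * (2 * (1-a) * sin t * cos t) = 2 * ((1-a) * ((sin t * cos t) * (sin t * cos t)))"
      by (simp add: algebra_simps)
    have "(1-a) * ((sin t * cos t) * (sin t * cos t)) \<le> 1"
      by (rule mult_le_one) (use sc assms in auto)
    moreover have "0 \<le> (1-a) * ((sin t * cos t) * (sin t * cos t))" using sc assms by simp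
    ultimately show ?thesis unfolding e by simp
  qed
  have N: "\<bar>(cos t * cos t - sin t * sin t) * D - sin t * cos t * (2 * (1-a) * sin t * cos t)\<bar> \<le> 3"
    using n2 n3 by linarith
  have "(1-a) * \<bar>(cos t * cos t - sin t * sin t) * D - sin t * cos t * (2 * (1-a) * sin t * cos t)\<bar> \<le> 1 * 3"
    by (rule mult_mono) (use N assms in auto)
  hence "\<bar>(1-a) * ((cos t * cos t - sin t * sin t) * D - sin t * cos t * (2 * (1-a) * sin t * cos t))\<bar> \<le> 3"
    using assms by (simp add: abs_mult)
  moreover have "a^2 \<le> D^2" using D assms by (simp add: power_mono)
  moreover have "a^2 > 0" using assms by simp
  ultimately have "\<bar>(1-a) * ((cos t * cos t - sin t * sin t) * D - sin t * cos t * (2 * (1-a) * sin t * cos t))\<bar> / D^2 \<le> 3 / a^2"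
    by (intro frac_le) auto
  thus ?thesis unfolding D_def by (simp add: abs_divide)
qed

lemma Th_deriv:
  assumes "0 < a" "a \<le> 1"
  shows "\<exists>d. (Th a has_real_derivative d) (at t) \<and> \<bar>d\<bar> \<le> 1 + 3 / a^2"
proof -
  define qd where "qd = (1-a) * ((cos t * cos t - sin t * sin t) * Dn a t - sin t * cos t * (2 * (1-a) * sin t * cos t)) / (Dn a t)^2"
  have Dnz: "Dn a t \<noteq> 0" using Dn_bounds[OF assms, of t] assms by auto
  have q: "(qf a has_real_derivative qd) (at t)" unfolding qd_def by (rule qf_deriv[OF Dnz])
  have "((\<lambda>t. t + arctan (qf a t)) has_real_derivative 1 + inverse (1 + (qf a t)^2) * qd) (at t)"
    by (auto intro!: derivative_eq_intros q)
  hence d: "(Th a has_real_derivative 1 + inverse (1 + (qf a t)^2) * qd) (at t)"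
    unfolding Th_def[abs_def] .
  have i: "0 < inverse (1 + (qf a t)^2)" "inverse (1 + (qf a t)^2) \<le> 1"
    by (auto simp: add_pos_nonneg field_simps)
  have "\<bar>inverse (1 + (qf a t)^2) * qd\<bar> \<le> \<bar>qd\<bar>"
    using i by (simp add: abs_mult mult_left_le_one_le)
  also have "\<bar>qd\<bar> \<le> 3 / a^2" unfolding qd_def by (rule qd_bound[OF assms])
  finally show ?thesis using d by (intro exI[of _ "1 + inverse (1 + (qf a t)^2) * qd"]) auto
qed


lemma cst_zero_iff: "lam \<ge> 0 \<Longrightarrow> cst lam = 0 \<longleftrightarrow> lam = 1"
proof -
  assume "lam \<ge> 0"
  have "lam^2 + 1 > 0" by (simp add: add_nonneg_pos)
  hence "cst lam = 0 \<longleftrightarrow> lam^2 = 1" unfolding cst_def by simp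
  also have "\<dots> \<longleftrightarrow> lam = 1" using \<open>lam \<ge> 0\<close>
    by (auto simp: power2_eq_1_iff)
  finally show ?thesis .
qed

lemma cst_mult: "(lam^2 + 1) * cst lam = lam^2 - 1"
proof -
  have "lam^2 + 1 > 0" by (simp add: add_nonneg_pos)
  thus ?thesis unfolding cst_def by simp
qed

lemma ringid: "((p*x)*q + p*(q*y)) * sn * c * C - ((p*x)*(q*y) * c^2 - p*q * sn^2) * S = p*q*(C*((x+y) * sn * c) - S*(x*y * c^2 - sn^2))"
  for p q x y sn c C S :: real by algebra

lemma kdiff: "(k::real) \<noteq> 0 \<Longrightarrow> (k * (x - y) = 0) = (y = x)" by auto

lemma circle_zero_iff:
  "poly (Dw lam mu w) (cis t) = 0 \<longleftrightarrow>
    sin (w*t) * (cst lam * cst mu * (cos t)^2 - (sin t)^2) = cos (w*t) * ((cst lam + cst mu) * sin t * cos t)"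
proof -
  define L where "L = lam^2" define M where "M = mu^2"
  have L1: "L + 1 > 0" unfolding L_def by (simp add: add_nonneg_pos)
  have M1: "M + 1 > 0" unfolding M_def by (simp add: add_nonneg_pos)
  have a: "L - 1 = (L+1) * cst lam" using cst_mult[of lam] unfolding L_def by simp
  have b: "M - 1 = (M+1) * cst mu" using cst_mult[of mu] unfolding M_def by simp
  have "poly (Dw lam mu w) (cis t) = (1 - of_real L * (cis t)^2) * (1 - of_real M * (cis t)^2)
     - (of_real L - (cis t)^2) * (of_real M - (cis t)^2) * (cis t)^(2*w)"
    by (simp only: poly_Dw L_def M_def)
  also have "\<dots> = 2 * \<i> * (cis t)^2 * cis (w*t) *
     of_real ((((L-1)*(M+1) + (L+1)*(M-1)) * sin t * cos t) * cos (w*t)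
       - ((L-1)*(M-1)*(cos t)^2 - (L+1)*(M+1)*(sin t)^2) * sin (w*t))"
    by (rule circ_formula)
  also have "\<dots> = 0 \<longleftrightarrow> (((L-1)*(M+1) + (L+1)*(M-1)) * sin t * cos t) * cos (w*t)
       - ((L-1)*(M-1)*(cos t)^2 - (L+1)*(M+1)*(sin t)^2) * sin (w*t) = 0"
  proof -
    have nz: "2 * \<i> * (cis t)^2 * cis (w*t) \<noteq> 0" by simp
    show ?thesis using nz by (metis mult_eq_0_iff of_real_eq_0_iff)
  qed
  also have "(((L-1)*(M+1) + (L+1)*(M-1)) * sin t * cos t) * cos (w*t)
       - ((L-1)*(M-1)*(cos t)^2 - (L+1)*(M+1)*(sin t)^2) * sin (w*t)
     = (L+1)*(M+1) * (cos (w*t) * ((cst lam + cst mu) * sin t * cos t)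
        - sin (w*t) * (cst lam * cst mu * (cos t)^2 - (sin t)^2))"
    unfolding a b by (rule ringid)
  also have "\<dots> = 0 \<longleftrightarrow> sin (w*t) * (cst lam * cst mu * (cos t)^2 - (sin t)^2) = cos (w*t) * ((cst lam + cst mu) * sin t * cos t)"
    using L1 M1 by (intro kdiff) simp
  finally show ?thesis .
qed

lemma part1:
  assumes "lam \<ge> 0" "mu \<ge> 0"
  shows "poly (Dw lam mu w) (cis t) = 0 \<longleftrightarrow>
          (star_sol lam mu w t \<or> ((lam = 1 \<or> mu = 1) \<and> sin t = 0))"
proof -
  define a where "a = cst lam" define b where "b = cst mu"
  define s where "s = sin t" define c where "c = cos t"
  define S where "S = sin (w*t)" define C where "C = cos (w*t)"
  have cs: "c^2 + s^2 = 1" by (simp add: c_def s_def)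
  have la: "lam = 1 \<longleftrightarrow> a = 0" using cst_zero_iff[OF assms(1)] a_def by simp
  have mb: "mu = 1 \<longleftrightarrow> b = 0" using cst_zero_iff[OF assms(2)] b_def by simp
  have E: "poly (Dw lam mu w) (cis t) = 0 \<longleftrightarrow> S * (a * b * c^2 - s^2) = C * ((a+b) * s * c)"
    unfolding circle_zero_iff a_def b_def s_def c_def S_def C_def ..
  have st: "star_sol lam mu w t = (if a + b = 0 then S = 0
      else if a * b = 0 then S * (- s) = C * ((a + b) * c)
      else S * (a * b * c^2 - s^2) = C * ((a + b) * s * c))"
    unfolding star_sol_def Let_def a_def b_def s_def c_def S_def C_def ..
  show ?thesis
  proof (cases "a + b = 0")
    case True
    hence bb: "b = -a" by simp
    have X: "a * b * c^2 - s^2 = 0 \<longleftrightarrow> a = 0 \<and> s = 0"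
    proof
      assume h: "a * b * c^2 - s^2 = 0"
      have "(a * c)^2 + s^2 = -(a * b * c^2 - s^2)" using bb by (simp add: power_mult_distrib power2_eq_square)
      hence "(a * c)^2 + s^2 = 0" using h by simp
      hence "a * c = 0" "s = 0" by (simp_all add: sum_power2_eq_zero_iff)
      moreover hence "c \<noteq> 0" using cs by auto
      ultimately show "a = 0 \<and> s = 0" by simp
    qed (simp add: bb)
    have E2: "poly (Dw lam mu w) (cis t) = 0 \<longleftrightarrow> S = 0 \<or> (a = 0 \<and> s = 0)"
      unfolding E True X[symmetric] by simp
    have st2: "star_sol lam mu w t = (S = 0)" unfolding st using True by simp
    have "(lam = 1 \<or> mu = 1) \<longleftrightarrow> a = 0" using la mb bb by auto
    thus ?thesis unfolding E2 st2 s_def by blast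
  next
    case False
    show ?thesis
    proof (cases "a * b = 0")
      case True
      have ab: "a * b * c^2 = 0" using True by simp
      have E2: "poly (Dw lam mu w) (cis t) = 0 \<longleftrightarrow> s = 0 \<or> S * (-s) = C * ((a+b) * c)"
      proof -
        have "S * (a * b * c^2 - s^2) = C * ((a+b) * s * c) \<longleftrightarrow> s * (S * (-s) - C * ((a+b) * c)) = 0"
          unfolding ab by (simp add: algebra_simps power2_eq_square)
        thus ?thesis unfolding E by simp
      qed
      have st2: "star_sol lam mu w t = (S * (-s) = C * ((a+b) * c))" unfolding st using True False by simp
      have "(lam = 1 \<or> mu = 1)" if "s = 0" using la mb True by simp
      thus ?thesis unfolding E2 st2 s_def by blast
    next
      case F2: False
      have st2: "star_sol lam mu w t = (S * (a * b * c^2 - s^2) = C * ((a+b) * s * c))" unfolding st using F2 False by simp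
      have "\<not> (lam = 1 \<or> mu = 1)" using la mb F2 by simp
      thus ?thesis unfolding E st2 by blast
    qed
  qed
qed



lemma part2: "poly (Dw lam mu w) 1 = 0 \<and> poly (Dw lam mu w) (-1) = 0"
proof -
  have "(-1::complex)^(2*w) = 1" by (rule neg_one_even_power) simp
  thus ?thesis by (simp add: poly_Dw algebra_simps)
qed

lemma Dw_even: "poly (Dw lam mu w) (-z) = poly (Dw lam mu w) z"
  by (simp add: poly_Dw power_mult)

lemma Dw_inv:
  assumes "z \<noteq> 0"
  shows "poly (Dw lam mu w) (1/z) = -((1/z)^(2*w+4) * poly (Dw lam mu w) z)"
proof -
  define P where "P = z^(2*w)"
  define y where "y = 1/z"
  define Q where "Q = y^(2*w)"
  define L where "L = (of_real (lam^2) :: complex)"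
  define M where "M = (of_real (mu^2) :: complex)"
  have yz: "y * z = 1" using assms by (simp add: y_def)
  have PQ: "P * Q = 1" unfolding P_def Q_def
    by (metis power_mult_distrib yz mult.commute power_one)
  have j: "(1/z)^(2*w+4) = Q * y^4" by (simp add: Q_def y_def power_add)
  have "(1 - L * y^2) * (1 - M * y^2) - (L - y^2) * (M - y^2) * Q
     = -((Q * y^4) * ((1 - L * z^2) * (1 - M * z^2) - (L - z^2) * (M - z^2) * P))"
    using yz PQ by algebra
  thus ?thesis unfolding poly_Dw j L_def M_def P_def Q_def y_def by simp
qed

lemma part_last:
  assumes "w \<ge> 1" "poly (Dw lam mu w) (complex_of_real p) = 0"
  shows "poly (Dw lam mu w) (complex_of_real (-p)) = 0
            \<and> poly (Dw lam mu w) (complex_of_real (1/p)) = 0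
            \<and> poly (Dw lam mu w) (complex_of_real (-1/p)) = 0"
proof -
  have p0: "p \<noteq> 0"
  proof
    assume "p = 0"
    thus False using assms by (simp add: poly_Dw zero_power)
  qed
  have a: "poly (Dw lam mu w) (complex_of_real (-p)) = 0" using assms Dw_even[of lam mu w "of_real p"] by simp
  have b: "poly (Dw lam mu w) (complex_of_real (1/p)) = 0"
    using Dw_inv[of "of_real p" lam mu w] assms p0 by simp
  have c: "poly (Dw lam mu w) (complex_of_real (-1/p)) = 0"
    using b Dw_even[of lam mu w "of_real (1/p)"] by simp
  show ?thesis using a b c by simp
qed



definition Ph :: "real \<Rightarrow> real \<Rightarrow> real" where
  "Ph a t = (if 0 < a then Th a t else pi - Th (-a) t)"

lemma Ph_polar:
  assumes "a \<noteq> 0" "\<bar>a\<bar> \<le> 1"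
  shows "\<exists>\<rho>>0. Complex (a * cos t) (sin t) = of_real \<rho> * cis (Ph a t)"
proof (cases "0 < a")
  case True
  thus ?thesis using Th_polar[of a t] assms by (simp add: Ph_def)
next
  case False
  hence a: "0 < -a" "-a \<le> 1" using assms by auto
  obtain \<rho> where r: "\<rho> > 0" "Complex (-a * cos t) (sin t) = of_real \<rho> * cis (Th (-a) t)"
    using Th_polar[OF a, of t] by auto
  have "Complex (a * cos t) (sin t) = - cnj (Complex (-a * cos t) (sin t))"
    by (simp add: complex_eq_iff)
  also have "\<dots> = of_real \<rho> * cis (pi - Th (-a) t)"
    unfolding r(2) by (simp add: complex_eq_iff)
  finally show ?thesis using r(1) False by (auto simp: Ph_def)
qed

lemma Ph_deriv:
  assumes "a \<noteq> 0" "\<bar>a\<bar> \<le> 1"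
  shows "\<exists>d. (Ph a has_real_derivative d) (at t) \<and> \<bar>d\<bar> \<le> 1 + 3 / a^2"
proof (cases "0 < a")
  case True
  have e: "Ph a = Th a" using True by (auto simp: Ph_def[abs_def])
  show ?thesis unfolding e using Th_deriv[of a t] True assms by auto
next
  case False
  hence a: "0 < -a" "-a \<le> 1" using assms by auto
  obtain d where d: "(Th (-a) has_real_derivative d) (at t)" "\<bar>d\<bar> \<le> 1 + 3 / (-a)^2"
    using Th_deriv[OF a, of t] by auto
  have e: "Ph a = (\<lambda>t. pi - Th (-a) t)" using False by (auto simp: Ph_def[abs_def])
  have "((\<lambda>t. pi - Th (-a) t) has_real_derivative 0 - d) (at t)"
    by (intro derivative_intros d(1))
  thus ?thesis unfolding e using d(2) by (intro exI[of _ "0 - d"]) simp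
qed

lemma Th_0: "Th a 0 = 0" by (simp add: Th_def qf_def)
lemma Th_2pi: "Th a (2*pi) = 2*pi" by (simp add: Th_def qf_def)

lemma Ph_change: "Ph a (2*pi) - Ph a 0 = (if 0 < a then 2 else -2) * pi"
  by (simp add: Ph_def Th_0 Th_2pi)

lemma count_general:
  fixes P :: "real \<Rightarrow> real" and w N :: nat and m :: int
  assumes der: "\<And>t. \<exists>d. (P has_real_derivative d) (at t) \<and> \<bar>d\<bar> \<le> B"
    and wB: "real w > B"
    and ch: "P (2*pi) - P 0 = of_int m * pi"
    and N: "int N = 2 * int w - m"
  shows "card {t. 0 \<le> t \<and> t < 2*pi \<and> sin (real w * t - P t) = 0} = N"
proof -
  define g where "g t = real w * t - P t" for t
  have gd: "\<exists>y. (g has_real_derivative y) (at t) \<and> y > 0" for t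
  proof -
    obtain d where d: "(P has_real_derivative d) (at t)" "\<bar>d\<bar> \<le> B" using der by blast
    have "(g has_real_derivative real w * 1 - d) (at t)"
      unfolding g_def[abs_def] by (rule DERIV_diff[OF DERIV_cmult[OF DERIV_ident] d(1)])
    moreover have "real w * 1 - d > 0" using d(2) wB by linarith
    ultimately show ?thesis by blast
  qed
  have cont: "continuous_on {0..2*pi} g"
    by (rule continuous_at_imp_continuous_on) (use gd DERIV_isCont in blast)
  have mono: "g x < g y" if "0 \<le> x" "x < y" "y \<le> 2*pi" for x y
    by (rule DERIV_pos_imp_increasing[OF that(2)]) (use gd in blast)
  have fin: "g (2*pi) = g 0 + N * pi"
  proof -
    have "real N = 2 * real w - m" using N by (metis of_int_diff of_int_mult of_int_of_nat_eq of_int_numeral)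
    hence "pi * (real w * 2) = pi * (real_of_int m + real N)" by simp
    hence "pi * (real w * 2) = pi * real_of_int m + pi * real N" by (simp only: distrib_left)
    thus ?thesis unfolding g_def using ch by (simp add: algebra_simps)
  qed
  show ?thesis using count_sin_zeros[OF cont mono fin] unfolding g_def by simp
qed


lemma cst_ge: "cst lam \<ge> -1"
proof -
  have p: "lam^2 + 1 > 0" by (simp add: add_nonneg_pos)
  show ?thesis unfolding cst_def using p by (simp add: field_simps)
qed

lemma cst_lt: "cst lam < 1"
proof -
  have p: "lam^2 + 1 > 0" by (simp add: add_nonneg_pos)
  show ?thesis unfolding cst_def using p by (simp add: field_simps)
qed

lemma cst_abs: "\<bar>cst lam\<bar> \<le> 1" using cst_ge[of lam] cst_lt[of lam] by linarith

lemma cst_pos_iff: "lam \<ge> 0 \<Longrightarrow> 0 < cst lam \<longleftrightarrow> lam > 1"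
proof -
  assume l: "lam \<ge> 0"
  have p: "lam^2 + 1 > 0" by (simp add: add_nonneg_pos)
  have "0 < cst lam \<longleftrightarrow> 1 < lam^2" unfolding cst_def using p by (simp add: zero_less_divide_iff)
  also have "\<dots> \<longleftrightarrow> 1 < lam" using l by (metis abs_of_nonneg one_less_power one_power2 power_less_imp_less_base zero_less_numeral not_less power2_eq_1_iff less_numeral_extra(4) less_irrefl)
  finally show ?thesis .
qed

lemma cst_neg_iff: "lam \<ge> 0 \<Longrightarrow> cst lam < 0 \<longleftrightarrow> lam < 1"
  using cst_pos_iff[of lam] cst_zero_iff[of lam] by (metis linorder_neqE_linordered_idom not_less_iff_gr_or_eq)

lemma im_cis: "Im (cis (-x) * (of_real \<rho> * cis \<theta>)) = \<rho> * sin (w - x)" if "w = \<theta>" for w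
  using that by (simp add: sin_diff algebra_simps)

lemma im_cx: "Im (cis (-x) * Complex X Y) = cos x * Y - sin x * X"
  by simp

lemma star_A:
  assumes "a = cst lam" "b = cst mu" "a \<noteq> 0" "b \<noteq> 0" "a + b \<noteq> 0"
  shows "star_sol lam mu w t \<longleftrightarrow> sin (real w * t - (Ph a t + Ph b t)) = 0"
proof -
  define c where "c = cos t" define s where "s = sin t"
  define C where "C = cos (w*t)" define S where "S = sin (w*t)"
  have st: "star_sol lam mu w t = (S * (a * b * c^2 - s^2) = C * ((a + b) * s * c))"
    unfolding star_sol_def Let_def assms(1,2)[symmetric] c_def s_def C_def S_def using assms by simp
  obtain ra where ra: "ra > 0" "Complex (a * c) s = of_real ra * cis (Ph a t)"
    using Ph_polar[OF assms(3)] assms(1) cst_abs c_def s_def by blast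
  obtain rb where rb: "rb > 0" "Complex (b * c) s = of_real rb * cis (Ph b t)"
    using Ph_polar[OF assms(4)] assms(2) cst_abs c_def s_def by blast
  have prod: "Complex (a * c) s * Complex (b * c) s = Complex (a * b * c^2 - s^2) ((a + b) * s * c)"
    by (simp add: complex_eq_iff power2_eq_square algebra_simps)
  have "C * ((a + b) * s * c) - S * (a * b * c^2 - s^2) = Im (cis (-(w*t)) * (Complex (a * c) s * Complex (b * c) s))"
    unfolding prod im_cx C_def S_def ..
  also have "\<dots> = Im (cis (-(w*t)) * (of_real (ra * rb) * cis (Ph a t + Ph b t)))"
    unfolding ra(2) rb(2) by (simp add: cis_mult[symmetric] mult_ac)
  also have "\<dots> = (ra * rb) * sin ((Ph a t + Ph b t) - w * t)" by (rule im_cis) simp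
  finally have e: "C * ((a + b) * s * c) - S * (a * b * c^2 - s^2) = - (ra * rb) * sin (real w * t - (Ph a t + Ph b t))"
    by (simp add: sin_diff algebra_simps)
  have "ra * rb \<noteq> 0" using ra rb by simp
  thus ?thesis unfolding st using e by (auto simp: algebra_simps)
qed

lemma star_B:
  assumes "cst lam = 0" "b = cst mu" "b \<noteq> 0"
  shows "star_sol lam mu w t \<longleftrightarrow> sin (real w * t - (Ph b t + pi/2)) = 0"
proof -
  define c where "c = cos t" define s where "s = sin t"
  define C where "C = cos (w*t)" define S where "S = sin (w*t)"
  have st: "star_sol lam mu w t = (S * (- s) = C * (b * c))"
    unfolding star_sol_def Let_def assms(1) assms(2)[symmetric] c_def s_def C_def S_def using assms by simp
  obtain rb where rb: "rb > 0" "Complex (b * c) s = of_real rb * cis (Ph b t)"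
    using Ph_polar[OF assms(3)] assms(2) cst_abs c_def s_def by blast
  have ii: "Complex (- s) (b * c) = \<i> * Complex (b * c) s" by (simp add: complex_eq_iff)
  have ic: "\<i> * cis (Ph b t) = cis (Ph b t + pi/2)" by (simp add: complex_eq_iff cos_add sin_add)
  have "C * (b * c) + S * s = Im (cis (-(w*t)) * Complex (- s) (b * c))"
    unfolding im_cx C_def S_def by simp
  also have "\<dots> = Im (cis (-(w*t)) * (of_real rb * cis (Ph b t + pi/2)))"
    unfolding ii rb(2) ic[symmetric] by (simp add: mult_ac)
  also have "\<dots> = rb * sin ((Ph b t + pi/2) - w * t)" by (rule im_cis) simp
  finally have e: "C * (b * c) + S * s = - rb * sin (real w * t - (Ph b t + pi/2))"
    by (simp add: sin_diff algebra_simps)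
  have r0: "rb \<noteq> 0" using rb by simp
  have "S * (- s) = C * (b * c) \<longleftrightarrow> C * (b * c) + S * s = 0" by linarith
  also have "\<dots> \<longleftrightarrow> rb * sin (real w * t - (Ph b t + pi/2)) = 0" unfolding e by linarith
  also have "\<dots> \<longleftrightarrow> sin (real w * t - (Ph b t + pi/2)) = 0" using r0 by simp
  finally show ?thesis unfolding st .
qed

lemma star_C:
  assumes "cst lam + cst mu = 0"
  shows "star_sol lam mu w t \<longleftrightarrow> sin (real w * t - 0) = 0"
  using assms by (simp add: star_sol_def Let_def)

lemma star_sym: "star_sol lam mu w t = star_sol mu lam w t"
  by (simp add: star_sol_def Let_def add.commute mult.commute)

lemma nsol_sym: "nsol lam mu w = nsol mu lam w"
  unfolding nsol_def using star_sym by presburger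


definition mch :: "real \<Rightarrow> int" where "mch a = (if 0 < a then 2 else -2)"

lemma Ph_change': "Ph a (2*pi) - Ph a 0 = of_int (mch a) * pi"
  unfolding Ph_change mch_def by simp

lemma ev_w: "eventually (\<lambda>w::nat. real w > B) sequentially"
proof (rule eventually_sequentiallyI[of "nat \<lceil>B\<rceil> + 1"])
  fix w :: nat assume "nat \<lceil>B\<rceil> + 1 \<le> w"
  hence "real (nat \<lceil>B\<rceil>) + 1 \<le> real w" by linarith
  moreover have "B \<le> real (nat \<lceil>B\<rceil>)" by linarith
  ultimately show "real w > B" by linarith
qed

lemma nsol_A:
  assumes "a = cst lam" "b = cst mu" "a \<noteq> 0" "b \<noteq> 0" "a + b \<noteq> 0"
  shows "eventually (\<lambda>w. int (nsol lam mu w) = 2 * int w - (mch a + mch b)) sequentially"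
proof -
  define B where "B = (1 + 3 / a^2) + (1 + 3 / b^2)"
  have B2: "B \<ge> 2" unfolding B_def by (simp add: add_nonneg_nonneg)
  show ?thesis using ev_w[of B]
  proof eventually_elim
    case (elim w)
    define P where "P t = Ph a t + Ph b t" for t
    have der: "\<exists>d. (P has_real_derivative d) (at t) \<and> \<bar>d\<bar> \<le> B" for t
    proof -
      obtain da where da: "(Ph a has_real_derivative da) (at t)" "\<bar>da\<bar> \<le> 1 + 3 / a^2"
        using Ph_deriv[OF assms(3)] assms(1) cst_abs by blast
      obtain db where db: "(Ph b has_real_derivative db) (at t)" "\<bar>db\<bar> \<le> 1 + 3 / b^2"
        using Ph_deriv[OF assms(4)] assms(2) cst_abs by blast
      have "(P has_real_derivative da + db) (at t)" unfolding P_def[abs_def]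
        by (rule DERIV_add[OF da(1) db(1)])
      moreover have "\<bar>da + db\<bar> \<le> B" unfolding B_def using da(2) db(2) by linarith
      ultimately show ?thesis by blast
    qed
    have ch: "P (2*pi) - P 0 = of_int (mch a + mch b) * pi"
      unfolding P_def using Ph_change'[of a] Ph_change'[of b] by (simp add: algebra_simps)
    have mb: "mch a + mch b \<le> 4" by (simp add: mch_def)
    have w3: "real w > 2" using elim B2 by linarith
    define N where "N = nat (2 * int w - (mch a + mch b))"
    have N: "int N = 2 * int w - (mch a + mch b)" unfolding N_def using mb w3 by simp
    have "nsol lam mu w = card {t. 0 \<le> t \<and> t < 2*pi \<and> sin (real w * t - P t) = 0}"
      unfolding nsol_def P_def using star_A[OF assms] by simp
    also have "\<dots> = N" by (rule count_general[OF der elim ch N])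
    finally show ?case using N by simp
  qed
qed

lemma nsol_B:
  assumes "cst lam = 0" "b = cst mu" "b \<noteq> 0"
  shows "eventually (\<lambda>w. int (nsol lam mu w) = 2 * int w - mch b) sequentially"
proof -
  define B where "B = (1 + 3 / b^2)"
  have B2: "B \<ge> 1" unfolding B_def by simp
  show ?thesis using ev_w[of B]
  proof eventually_elim
    case (elim w)
    define P where "P t = Ph b t + pi/2" for t
    have der: "\<exists>d. (P has_real_derivative d) (at t) \<and> \<bar>d\<bar> \<le> B" for t
    proof -
      obtain db where db: "(Ph b has_real_derivative db) (at t)" "\<bar>db\<bar> \<le> 1 + 3 / b^2"
        using Ph_deriv[OF assms(3)] assms(2) cst_abs by blast
      have "(P has_real_derivative db + 0) (at t)" unfolding P_def[abs_def]
        by (rule DERIV_add[OF db(1) DERIV_const])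
      thus ?thesis using db(2) unfolding B_def by auto
    qed
    have ch: "P (2*pi) - P 0 = of_int (mch b) * pi"
      unfolding P_def using Ph_change'[of b] by (simp add: algebra_simps)
    have mb: "mch b \<le> 2" by (simp add: mch_def)
    have w3: "real w > 1" using elim B2 by linarith
    define N where "N = nat (2 * int w - mch b)"
    have N: "int N = 2 * int w - mch b" unfolding N_def using mb w3 by simp
    have "nsol lam mu w = card {t. 0 \<le> t \<and> t < 2*pi \<and> sin (real w * t - P t) = 0}"
      unfolding nsol_def P_def using star_B[OF assms] by simp
    also have "\<dots> = N" by (rule count_general[OF der elim ch N])
    finally show ?case using N by simp
  qed
qed

lemma nsol_C:
  assumes "cst lam + cst mu = 0" "w \<ge> 1"
  shows "nsol lam mu w = 2 * w"
proof -
  define P where "P t = (0::real)" for t :: real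
  have der: "\<exists>d. (P has_real_derivative d) (at t) \<and> \<bar>d\<bar> \<le> 0" for t
    unfolding P_def by (intro exI[of _ 0]) auto
  have w: "real w > 0" using assms by simp
  have ch: "P (2*pi) - P 0 = of_int 0 * pi" unfolding P_def by simp
  have N: "int (2*w) = 2 * int w - 0" by simp
  have "nsol lam mu w = card {t. 0 \<le> t \<and> t < 2*pi \<and> sin (real w * t - P t) = 0}"
    unfolding nsol_def P_def using star_C[OF assms(1)] by simp
  also have "\<dots> = 2 * w" by (rule count_general[OF der w ch N])
  finally show ?thesis .
qed


lemma cis_inj: "inj_on cis {t. 0 \<le> t \<and> t < 2*pi}"
proof (rule inj_onI)
  fix x y assume x: "x \<in> {t. 0 \<le> t \<and> t < 2*pi}" and y: "y \<in> {t. 0 \<le> t \<and> t < 2*pi}" and e: "cis x = cis y"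
  have "sin y = sin x \<and> cos y = cos x" using e by (metis cis.sel(1) cis.sel(2))
  then obtain n :: int where n: "y = x + 2 * pi * n" using sin_cos_eq_iff by blast
  have "\<bar>2 * pi * n\<bar> < 2 * pi" using x y n by auto
  hence "\<bar>real_of_int n\<bar> < 1" by (simp add: abs_mult)
  hence "n = 0" by linarith
  thus "x = y" using n by simp
qed

definition Sol :: "real \<Rightarrow> real \<Rightarrow> nat \<Rightarrow> real set" where
  "Sol lam mu w = {t. 0 \<le> t \<and> t < 2*pi \<and> star_sol lam mu w t}"

lemma card_cis_Sol: "card (cis ` Sol lam mu w) = nsol lam mu w"
proof -
  have "inj_on cis (Sol lam mu w)" by (rule inj_on_subset[OF cis_inj]) (auto simp: Sol_def)
  thus ?thesis by (simp add: card_image nsol_def Sol_def)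
qed

lemma roots_finite: "w \<ge> 1 \<Longrightarrow> finite {z. poly (Dw lam mu w) z = 0}"
  using poly_roots_finite Dw_nz by blast

lemma sum_ge_card:
  assumes "finite A" "p \<noteq> 0" "\<And>z. z \<in> A \<Longrightarrow> poly p z = 0"
  shows "card A \<le> (\<Sum>z\<in>A. order z p)"
proof -
  have "card A = (\<Sum>z\<in>A. 1)" by simp
  also have "\<dots> \<le> (\<Sum>z\<in>A. order z p)"
    by (rule sum_mono) (use assms order_root in \<open>auto simp: Suc_le_eq\<close>)
  finally show ?thesis .
qed

lemma circle_sub:
  assumes "w \<ge> 1" "X \<subseteq> {z. poly (Dw lam mu w) z = 0 \<and> cmod z = 1}"
  shows "(\<Sum>z\<in>X. order z (Dw lam mu w)) \<le> circle_zeros (Dw lam mu w)"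
  unfolding circle_zeros_def
  by (rule sum_mono2) (use assms roots_finite[OF assms(1)] in \<open>auto intro: finite_subset\<close>)

lemma real_sub:
  assumes "w \<ge> 1" "X \<subseteq> {z. poly (Dw lam mu w) z = 0 \<and> Im z = 0 \<and> cmod z \<noteq> 1}"
  shows "(\<Sum>z\<in>X. order z (Dw lam mu w)) \<le> real_zeros (Dw lam mu w)"
  unfolding real_zeros_def
  by (rule sum_mono2) (use assms roots_finite[OF assms(1)] in \<open>auto intro: finite_subset\<close>)

lemma circle_card:
  assumes "w \<ge> 1" "X \<subseteq> {z. poly (Dw lam mu w) z = 0 \<and> cmod z = 1}"
  shows "card X \<le> circle_zeros (Dw lam mu w)"
proof -
  have f: "finite X" using assms roots_finite[OF assms(1)] by (auto intro: finite_subset)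
  show ?thesis using sum_ge_card[OF f Dw_nz[OF assms(1)]] circle_sub[OF assms] assms(2) by force
qed

lemma real_card:
  assumes "w \<ge> 1" "X \<subseteq> {z. poly (Dw lam mu w) z = 0 \<and> Im z = 0 \<and> cmod z \<noteq> 1}"
  shows "card X \<le> real_zeros (Dw lam mu w)"
proof -
  have f: "finite X" using assms roots_finite[OF assms(1)] by (auto intro: finite_subset)
  show ?thesis using sum_ge_card[OF f Dw_nz[OF assms(1)]] real_sub[OF assms] assms(2) by force
qed

lemma total_le:
  assumes "w \<ge> 1"
  shows "circle_zeros (Dw lam mu w) + real_zeros (Dw lam mu w) \<le> 2*w+4"
proof -
  define p where "p = Dw lam mu w"
  define Cs where "Cs = {z. poly p z = 0 \<and> cmod z = 1}"
  define Rs where "Rs = {z. poly p z = 0 \<and> Im z = 0 \<and> cmod z \<noteq> 1}"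
  have fin: "finite {z. poly p z = 0}" using roots_finite[OF assms] p_def by simp
  have fC: "finite Cs" "finite Rs" using fin by (auto simp: Cs_def Rs_def intro: finite_subset)
  have "circle_zeros p + real_zeros p = (\<Sum>z\<in>Cs \<union> Rs. order z p)"
    unfolding circle_zeros_def real_zeros_def Cs_def[symmetric] Rs_def[symmetric]
    by (rule sum.union_disjoint[symmetric]) (use fC in \<open>auto simp: Cs_def Rs_def\<close>)
  also have "\<dots> \<le> (\<Sum>z | poly p z = 0. order z p)"
    by (rule sum_mono2[OF fin]) (auto simp: Cs_def Rs_def)
  also have "\<dots> \<le> degree p" by (rule sum_order_le_degree) (use Dw_nz[OF assms] p_def in simp)
  also have "\<dots> \<le> 2*w+4" unfolding p_def by (rule Dw_deg)
  finally show ?thesis unfolding p_def .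
qed

lemma tally:
  assumes "w \<ge> 1" "n1 \<le> circle_zeros (Dw lam mu w)" "n2 \<le> real_zeros (Dw lam mu w)" "n1 + n2 = 2*w+4"
  shows "circle_zeros (Dw lam mu w) = n1 \<and> real_zeros (Dw lam mu w) = n2"
  using total_le[OF assms(1), of lam mu] assms by linarith

lemma Sol_roots:
  assumes "lam \<ge> 0" "mu \<ge> 0"
  shows "cis ` Sol lam mu w \<subseteq> {z. poly (Dw lam mu w) z = 0 \<and> cmod z = 1}"
  using part1[OF assms] by (auto simp: Sol_def)

lemma circle_lower_plain:
  assumes "w \<ge> 1" "lam \<ge> 0" "mu \<ge> 0"
  shows "nsol lam mu w \<le> circle_zeros (Dw lam mu w)"
  using circle_card[OF assms(1) Sol_roots[OF assms(2,3)]] card_cis_Sol by simp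

lemma pm1_not_Sol:
  assumes "cst lam + cst mu \<noteq> 0" "cst lam * cst mu = 0" "t \<in> Sol lam mu w"
  shows "sin t \<noteq> 0"
proof
  assume s: "sin t = 0"
  have t: "0 \<le> t" "t < 2*pi" "star_sol lam mu w t" using assms(3) by (auto simp: Sol_def)
  obtain i :: int where i: "t = i * pi" using s sin_zero_iff_int2 by blast
  have "0 \<le> i" "i < 2" using t i by (auto simp: zero_le_mult_iff mult_less_cancel_right)
  hence "i = 0 \<or> i = 1" by auto
  hence cC: "cos t \<noteq> 0" "cos (w * t) \<noteq> 0" using i by (auto simp: mult.commute)
  have "sin (w*t) * (- sin t) = cos (w*t) * ((cst lam + cst mu) * cos t)"
    using t(3) assms(1,2) by (simp add: star_sol_def Let_def)
  thus False using s cC assms(1) by simp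
qed

lemma circle_lower_B:
  assumes "w \<ge> 1" "lam \<ge> 0" "mu \<ge> 0" "cst lam + cst mu \<noteq> 0" "cst lam * cst mu = 0"
  shows "nsol lam mu w + 2 \<le> circle_zeros (Dw lam mu w)"
proof -
  define X where "X = cis ` Sol lam mu w"
  have d: "1 \<notin> X" "-1 \<notin> X"
  proof -
    show "1 \<notin> X"
    proof
      assume "1 \<in> X"
      then obtain t where t: "t \<in> Sol lam mu w" "cis t = 1" by (auto simp: X_def)
      have "sin t = Im (cis t)" by simp
      also have "\<dots> = 0" unfolding t(2) by simp
      finally show False using pm1_not_Sol[OF assms(4,5) t(1)] by simp
    qed
    show "-1 \<notin> X"
    proof
      assume "-1 \<in> X"
      then obtain t where t: "t \<in> Sol lam mu w" "cis t = -1" by (auto simp: X_def)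
      have "sin t = Im (cis t)" by simp
      also have "\<dots> = 0" unfolding t(2) by simp
      finally show False using pm1_not_Sol[OF assms(4,5) t(1)] by simp
    qed
  qed
  have sub: "insert 1 (insert (-1) X) \<subseteq> {z. poly (Dw lam mu w) z = 0 \<and> cmod z = 1}"
    using Sol_roots[OF assms(2,3)] part2[of lam mu w] by (auto simp: X_def)
  have fX: "finite X" using sub roots_finite[OF assms(1)] by (auto intro: finite_subset)
  have "card (insert 1 (insert (-1) X)) = card X + 2" using d fX by simp
  thus ?thesis using circle_card[OF assms(1) sub] card_cis_Sol X_def by simp
qed


lemma Dw11: "Dw 1 1 w = [:1,0,-1:] * [:1,0,-1:] * (1 - monom 1 (2*w))"
  unfolding Dw_def by (simp only: power_one of_real_1) (simp only: right_diff_distrib mult_1_right)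

lemma order_ge3:
  assumes "w \<ge> 1" "c = 1 \<or> c = -1"
  shows "3 \<le> order c (Dw 1 1 w)"
proof -
  have A: "[:-c, 1:] dvd [:1,0,-1:]"
    by (subst poly_eq_0_iff_dvd[symmetric]) (use assms(2) in auto)
  have e: "c^(2*w) = 1" using assms(2) by (auto simp: power_mult)
  have B: "[:-c, 1:] dvd (1 - monom 1 (2*w) :: complex poly)"
    by (subst poly_eq_0_iff_dvd[symmetric]) (simp add: poly_monom e)
  have "[:-c, 1:]^3 dvd [:1,0,-1:] * [:1,0,-1:] * (1 - monom 1 (2*w))"
    unfolding power3_eq_cube by (intro mult_dvd_mono A B)
  hence "[:-c, 1:]^3 dvd Dw 1 1 w" unfolding Dw11 .
  thus ?thesis using order_divides[of c 3 "Dw 1 1 w"] Dw_nz[OF assms(1)] by simp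
qed

lemma case3:
  assumes "w \<ge> 1"
  shows "nsol 1 1 w = 2*w \<and> circle_zeros (Dw 1 1 w) = 2*w+4 \<and> real_zeros (Dw 1 1 w) = 0
    \<and> order 1 (Dw 1 1 w) = 3 \<and> order (-1) (Dw 1 1 w) = 3"
proof -
  have c1: "cst 1 = 0" by (simp add: cst_def)
  have ns: "nsol 1 1 w = 2*w" by (rule nsol_C) (use c1 assms in auto)
  define p where "p = Dw 1 1 w"
  define X where "X = cis ` Sol 1 1 w"
  have cX: "card X = 2*w" using card_cis_Sol ns X_def by simp
  have sub: "X \<subseteq> {z. poly p z = 0 \<and> cmod z = 1}" using Sol_roots[of 1 1 w] X_def p_def by simp
  have fX: "finite X" using sub roots_finite[OF assms] p_def by (auto intro: finite_subset)
  have st: "star_sol 1 1 w t \<longleftrightarrow> sin (real w * t) = 0" for t :: real using c1 by (simp add: star_sol_def Let_def)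
  have "0 \<in> Sol 1 1 w" by (simp add: Sol_def st)
  hence "cis 0 \<in> X" unfolding X_def by (rule imageI)
  hence i1: "1 \<in> X" by simp
  have "pi \<in> Sol 1 1 w" by (simp add: Sol_def st)
  hence "cis pi \<in> X" unfolding X_def by (rule imageI)
  hence i2: "-1 \<in> X" by simp
  have o1: "3 \<le> order 1 p" "3 \<le> order (-1) p" using order_ge3[OF assms] p_def by auto
  have "(\<Sum>z\<in>X. order z p) = (\<Sum>z\<in>X - {1,-1}. order z p) + (\<Sum>z\<in>{1,-1}. order z p)"
    by (rule sum.subset_diff) (use i1 i2 fX in auto)
  also have "(\<Sum>z\<in>{1,-1}. order z p) = order 1 p + order (-1) p" by simp
  finally have s1: "(\<Sum>z\<in>X. order z p) = (\<Sum>z\<in>X - {1,-1}. order z p) + order 1 p + order (-1) p" by simp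
  have "card (X - {1,-1}) \<le> (\<Sum>z\<in>X - {1,-1}. order z p)"
    by (rule sum_ge_card) (use fX sub Dw_nz[OF assms] p_def in auto)
  moreover have "card (X - {1,-1}) = 2*w - 2" using cX i1 i2 fX by (simp add: card_Diff_subset)
  ultimately have s2: "2*w - 2 + order 1 p + order (-1) p \<le> (\<Sum>z\<in>X. order z p)" using s1 by linarith
  have s3: "(\<Sum>z\<in>X. order z p) \<le> circle_zeros p" using circle_sub[OF assms, of X 1 1] sub p_def by simp
  have tl: "circle_zeros p + real_zeros p \<le> 2*w+4" using total_le[OF assms] p_def by simp
  have "2*w+4 \<le> circle_zeros p" using s2 s3 o1 assms by linarith
  hence t: "circle_zeros p = 2*w+4 \<and> real_zeros p = 0" using tally[OF assms, of "2*w+4" 1 1 0] p_def by simp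
  have "order 1 p = 3" "order (-1) p = 3" using s2 s3 tl o1 assms by linarith+
  thus ?thesis using t ns p_def by simp
qed


definition Dr :: "real \<Rightarrow> real \<Rightarrow> nat \<Rightarrow> real \<Rightarrow> real" where
  "Dr lam mu w p = (1 - lam^2 * p^2) * (1 - mu^2 * p^2) - (lam^2 - p^2) * (mu^2 - p^2) * p^(2*w)"

lemma poly_Dw_real: "poly (Dw lam mu w) (of_real p) = of_real (Dr lam mu w p)"
  by (simp add: poly_Dw Dr_def)

lemma Dr_cont: "continuous_on S (Dr lam mu w)"
  unfolding Dr_def[abs_def] by (intro continuous_intros)

lemma ev_small:
  fixes p K e :: real
  assumes "0 \<le> p" "p < 1" "e > 0"
  shows "eventually (\<lambda>w::nat. \<bar>K * p^w\<bar> < e) sequentially"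
proof -
  have "(\<lambda>w. p^w) \<longlonglongrightarrow> 0" by (rule LIMSEQ_power_zero) (use assms in simp)
  hence "(\<lambda>w. K * p^w) \<longlonglongrightarrow> 0" by (rule tendsto_mult_right_zero)
  hence "\<forall>e>0. eventually (\<lambda>w. dist (K * p^w) 0 < e) sequentially" by (simp only: tendsto_iff)
  hence "eventually (\<lambda>w. dist (K * p^w) 0 < e) sequentially" using assms(3) by blast
  thus ?thesis by simp
qed

lemma ev_sign:
  assumes "0 < p" "p < 1"
  shows "(1 - lam^2 * p^2) * (1 - mu^2 * p^2) > 0 \<Longrightarrow> eventually (\<lambda>w. Dr lam mu w p > 0) sequentially"
    and "(1 - lam^2 * p^2) * (1 - mu^2 * p^2) < 0 \<Longrightarrow> eventually (\<lambda>w. Dr lam mu w p < 0) sequentially"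
proof -
  define A where "A = (1 - lam^2 * p^2) * (1 - mu^2 * p^2)"
  define K where "K = (lam^2 - p^2) * (mu^2 - p^2)"
  have p2: "0 \<le> p^2" "p^2 < 1" using assms by (auto simp: power_less_one_iff)
  have Dr: "Dr lam mu w p = A - K * (p^2)^w" for w unfolding Dr_def A_def K_def by (simp add: power_mult)
  show "A > 0 \<Longrightarrow> eventually (\<lambda>w. Dr lam mu w p > 0) sequentially"
  proof -
    assume "A > 0"
    from ev_small[OF p2 this, of K] show ?thesis by eventually_elim (simp add: Dr abs_less_iff)
  qed
  show "A < 0 \<Longrightarrow> eventually (\<lambda>w. Dr lam mu w p < 0) sequentially"
  proof -
    assume "A < 0"
    hence "-A > 0" by simp
    from ev_small[OF p2 this, of K] show ?thesis by eventually_elim (simp add: Dr abs_less_iff)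
  qed
qed

lemma root_between:
  fixes f :: "real \<Rightarrow> real"
  assumes "q1 < q2" "f q1 > 0 \<and> f q2 < 0 \<or> f q1 < 0 \<and> f q2 > 0" "continuous_on {q1..q2} f"
  shows "\<exists>r. q1 < r \<and> r < q2 \<and> f r = 0"
proof -
  have "\<exists>r. q1 \<le> r \<and> r \<le> q2 \<and> f r = 0"
  proof (cases "f q1 > 0")
    case True
    hence "(\<lambda>x. - f x) q1 \<le> 0" "0 \<le> (\<lambda>x. - f x) q2" using assms(2) by auto
    from IVT'[of "\<lambda>x. - f x", OF this] assms(1,3) show ?thesis by (auto intro: continuous_intros)
  next
    case False
    hence "f q1 \<le> 0" "0 \<le> f q2" using assms(2) by auto
    from IVT'[of f, OF this] assms(1,3) show ?thesis by auto
  qed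
  then obtain r where "q1 \<le> r" "r \<le> q2" "f r = 0" by blast
  moreover have "r \<noteq> q1" "r \<noteq> q2" using assms(2) \<open>f r = 0\<close> by auto
  ultimately show ?thesis by (intro exI[of _ r]) auto
qed

definition quad :: "real \<Rightarrow> complex set" where
  "quad r = of_real ` {r, -r, 1/r, -1/r}"

lemma quad_card: assumes "0 < r" "r < 1" shows "card (quad r) = 4"
proof -
  have i: "1 < 1/r" using assms by simp
  have p: "0 < 1/r" using assms by simp
  have d: "r \<noteq> -r" "r \<noteq> 1/r" "r \<noteq> -(1/r)" "-r \<noteq> 1/r" "-r \<noteq> -(1/r)" "1/r \<noteq> -(1/r)"
    using assms i p by linarith+
  have "card {r, -r, 1/r, -1/r} = 4" using d by simp
  moreover have "inj_on (of_real :: real \<Rightarrow> complex) {r, -r, 1/r, -1/r}"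
    by (rule inj_onI) (simp only: of_real_eq_iff)
  ultimately show ?thesis unfolding quad_def by (simp only: card_image)
qed

lemma quad_disj: assumes "0 < r1" "r1 < 1" "0 < r2" "r2 < 1" "r1 \<noteq> r2" shows "quad r1 \<inter> quad r2 = {}"
proof -
  have i: "1 < 1/r1" "1 < 1/r2" using assms by simp_all
  have "1/r1 \<noteq> 1/r2" using assms by simp
  moreover have pos: "0 < 1/r1" "0 < 1/r2" using assms by simp_all
  ultimately have "{r1, -r1, 1/r1, -1/r1} \<inter> {r2, -r2, 1/r2, -1/r2} = {}"
    by (auto; insert i pos assms; linarith)
  thus ?thesis unfolding quad_def image_Int[OF inj_of_real, symmetric] by (simp only: image_empty)
qed

lemma quad_sub:
  assumes "w \<ge> 1" "0 < r" "r < 1" "Dr lam mu w r = 0"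
  shows "quad r \<subseteq> {z. poly (Dw lam mu w) z = 0 \<and> Im z = 0 \<and> cmod z \<noteq> 1}"
proof -
  have z: "poly (Dw lam mu w) (of_real r) = 0" using assms poly_Dw_real by simp
  have i: "1 < 1/r" using assms by simp
  show ?thesis using part_last[OF assms(1) z] z assms i unfolding quad_def by (auto simp: norm_divide)
qed

lemma real_lower4:
  assumes "w \<ge> 1" "0 < r" "r < 1" "Dr lam mu w r = 0"
  shows "4 \<le> real_zeros (Dw lam mu w)"
  using real_card[OF assms(1) quad_sub[OF assms]] quad_card[OF assms(2,3)] by simp

lemma real_lower8:
  assumes "w \<ge> 1" "0 < r1" "r1 < 1" "Dr lam mu w r1 = 0" "0 < r2" "r2 < 1" "Dr lam mu w r2 = 0" "r1 \<noteq> r2"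
  shows "8 \<le> real_zeros (Dw lam mu w)"
proof -
  have s: "quad r1 \<union> quad r2 \<subseteq> {z. poly (Dw lam mu w) z = 0 \<and> Im z = 0 \<and> cmod z \<noteq> 1}"
    using quad_sub[OF assms(1-4)] quad_sub[OF assms(1) assms(5-7)] by auto
  have "card (quad r1 \<union> quad r2) = 8"
    using quad_card[OF assms(2,3)] quad_card[OF assms(5,6)] quad_disj[OF assms(2,3,5,6,8)]
    by (subst card_Un_disjoint) (auto simp: quad_def)
  thus ?thesis using real_card[OF assms(1) s] by simp
qed


lemma Dr_sym: "Dr lam mu w p = Dr mu lam w p" unfolding Dr_def by (simp add: algebra_simps)

lemma sq_lt1: "0 \<le> x \<Longrightarrow> x < 1 \<Longrightarrow> 1 - x^2 > (0::real)"
  by (simp add: power_less_one_iff)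
lemma sq_gt1: "1 < x \<Longrightarrow> 1 - x^2 < (0::real)"
  by (simp add: one_less_power)

lemma avg_gt: "1 < x \<Longrightarrow> 1 < y \<Longrightarrow> 1 < (x+y)/(2::real)" by simp

lemma ms: "(l::real)^2 * p^2 = (l * p)^2" by (simp add: power_mult_distrib)

lemma roots_one:
  assumes "lam > 1" "0 \<le> mu" "mu \<le> 1"
  shows "eventually (\<lambda>w. \<exists>r. 0 < r \<and> r < 1 \<and> Dr lam mu w r = 0) sequentially"
proof -
  define q1 where "q1 = 1 / (2 * lam)"
  define q2 where "q2 = (1 / lam + 1) / 2"
  have l0: "lam > 0" using assms by simp
  have il: "0 < 1/lam" "1/lam < 1" using assms by auto
  have q: "0 < q1" "q1 < q2" "q2 < 1" using il l0 unfolding q1_def q2_def by (auto simp: field_simps)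
  have "lam * q1 = 1/2" using l0 unfolding q1_def by simp
  hence a1: "1 - (lam * q1)^2 > 0" by (intro sq_lt1) auto
  have "mu * q1 \<le> q1" using assms q by (simp add: mult_left_le_one_le)
  hence "mu * q1 < 1" using q by linarith
  hence b1: "1 - (mu * q1)^2 > 0" using assms q by (intro sq_lt1) auto
  have "lam * q2 = (1 + lam) / 2" using l0 unfolding q2_def by (simp add: field_simps)
  hence a2: "1 - (lam * q2)^2 < 0" using assms by (intro sq_gt1) simp
  have "mu * q2 \<le> q2" using assms q by (simp add: mult_left_le_one_le)
  hence "mu * q2 < 1" using q by linarith
  hence b2: "1 - (mu * q2)^2 > 0" using assms q by (intro sq_lt1) auto
  have A1: "(1 - lam^2 * q1^2) * (1 - mu^2 * q1^2) > 0" unfolding ms using a1 b1 by simp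
  have A2: "(1 - lam^2 * q2^2) * (1 - mu^2 * q2^2) < 0" unfolding ms using a2 b2 by (simp add: mult_neg_pos)
  have e1: "eventually (\<lambda>w. Dr lam mu w q1 > 0) sequentially" by (rule ev_sign(1)) (use q A1 in auto)
  have e2: "eventually (\<lambda>w. Dr lam mu w q2 < 0) sequentially" by (rule ev_sign(2)) (use q A2 in auto)
  from e1 e2 show ?thesis
  proof eventually_elim
    case (elim w)
    obtain r where "q1 < r" "r < q2" "Dr lam mu w r = 0"
      using root_between[of q1 q2 "Dr lam mu w"] q elim Dr_cont by blast
    thus ?case using q by (intro exI[of _ r]) auto
  qed
qed

lemma roots_two:
  assumes "lam > mu" "mu > 1"
  shows "eventually (\<lambda>w. \<exists>r1 r2. 0 < r1 \<and> r1 < 1 \<and> Dr lam mu w r1 = 0 \<and>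
                                0 < r2 \<and> r2 < 1 \<and> Dr lam mu w r2 = 0 \<and> r1 \<noteq> r2) sequentially"
proof -
  define q0 where "q0 = 1 / (2 * lam)"
  define q1 where "q1 = (1 / lam + 1 / mu) / 2"
  define q2 where "q2 = (1 / mu + 1) / 2"
  have l0: "lam > 0" "mu > 0" using assms by auto
  have il: "0 < 1/lam" "1/lam < 1/mu" "1/mu < 1" using assms l0 by (auto simp: field_simps)
  have q: "0 < q0" "q0 < q1" "q1 < q2" "q2 < 1" using il l0 unfolding q0_def q1_def q2_def by (auto simp: field_simps)
  have "lam * q0 = 1/2" using l0 unfolding q0_def by simp
  hence a0: "1 - (lam * q0)^2 > 0" by (intro sq_lt1) auto
  have "mu * q0 = mu / lam / 2" using l0 unfolding q0_def by (simp add: field_simps)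
  moreover have "mu / lam < 1" using assms l0 by simp
  ultimately have b0: "1 - (mu * q0)^2 > 0" using l0 q by (intro sq_lt1) auto
  have "lam * q1 = (1 + lam / mu) / 2" using l0 unfolding q1_def by (simp add: field_simps)
  moreover have "lam / mu > 1" using assms l0 by simp
  ultimately have a1: "1 - (lam * q1)^2 < 0" by (intro sq_gt1) simp
  have "mu * q1 = (mu / lam + 1) / 2" using l0 unfolding q1_def by (simp add: field_simps)
  moreover have "mu / lam < 1" using assms l0 by simp
  moreover have "(mu / lam + 1) / 2 < 1" using \<open>mu / lam < 1\<close> by simp
  ultimately have "mu * q1 < 1" by simp
  hence b1: "1 - (mu * q1)^2 > 0" using l0 q by (intro sq_lt1) auto
  have "lam * q2 = (lam / mu + lam) / 2" using l0 unfolding q2_def by (simp add: field_simps)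
  moreover have "lam / mu > 1" using assms l0 by simp
  moreover have "(lam / mu + lam) / 2 > 1" using \<open>lam / mu > 1\<close> assms by (intro avg_gt) auto
  ultimately have "lam * q2 > 1" by simp
  hence a2: "1 - (lam * q2)^2 < 0" by (intro sq_gt1)
  have "mu * q2 = (1 + mu) / 2" using l0 unfolding q2_def by (simp add: field_simps)
  hence b2: "1 - (mu * q2)^2 < 0" using assms by (intro sq_gt1) simp
  have A0: "(1 - lam^2 * q0^2) * (1 - mu^2 * q0^2) > 0" unfolding ms using a0 b0 by simp
  have A1: "(1 - lam^2 * q1^2) * (1 - mu^2 * q1^2) < 0" unfolding ms using a1 b1 by (simp add: mult_neg_pos)
  have A2: "(1 - lam^2 * q2^2) * (1 - mu^2 * q2^2) > 0" unfolding ms using a2 b2 by (simp add: mult_neg_neg)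
  have e0: "eventually (\<lambda>w. Dr lam mu w q0 > 0) sequentially" by (rule ev_sign(1)) (use q A0 in auto)
  have e1: "eventually (\<lambda>w. Dr lam mu w q1 < 0) sequentially" by (rule ev_sign(2)) (use q A1 in auto)
  have e2: "eventually (\<lambda>w. Dr lam mu w q2 > 0) sequentially" by (rule ev_sign(1)) (use q A2 in auto)
  from e0 e1 e2 show ?thesis
  proof eventually_elim
    case (elim w)
    obtain r1 where r1: "q0 < r1" "r1 < q1" "Dr lam mu w r1 = 0"
      using root_between[of q0 q1 "Dr lam mu w"] q elim Dr_cont by blast
    obtain r2 where r2: "q1 < r2" "r2 < q2" "Dr lam mu w r2 = 0"
      using root_between[of q1 q2 "Dr lam mu w"] q elim Dr_cont by blast
    show ?case using q r1 r2 by (intro exI[of _ r1] exI[of _ r2]) auto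
  qed
qed

lemma roots_eq:
  assumes "lam > 1"
  shows "eventually (\<lambda>w. \<exists>r1 r2. 0 < r1 \<and> r1 < 1 \<and> Dr lam lam w r1 = 0 \<and>
                                0 < r2 \<and> r2 < 1 \<and> Dr lam lam w r2 = 0 \<and> r1 \<noteq> r2) sequentially"
proof -
  define q0 where "q0 = 1 / (2 * lam)"
  define q1 where "q1 = (1 / lam + 1) / 2"
  define Fm where "Fm w p = (1 - lam^2 * p^2) - (lam^2 - p^2) * p^w" for w :: nat and p :: real
  define Fp where "Fp w p = (1 - lam^2 * p^2) + (lam^2 - p^2) * p^w" for w :: nat and p :: real
  have fac: "Dr lam lam w p = Fm w p * Fp w p" for w p
    unfolding Dr_def Fm_def Fp_def by (simp add: power_mult algebra_simps power2_eq_square)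
  have l0: "lam > 0" using assms by simp
  have il: "0 < 1/lam" "1/lam < 1" using assms by auto
  have q: "0 < q0" "q0 < q1" "q1 < 1" using il l0 unfolding q0_def q1_def by (auto simp: field_simps)
  have "lam * q0 = 1/2" using l0 unfolding q0_def by simp
  hence a0: "1 - lam^2 * q0^2 > 0" unfolding ms by (intro sq_lt1) auto
  have "lam * q1 = (1 + lam) / 2" using l0 unfolding q1_def by (simp add: field_simps)
  hence a1: "1 - lam^2 * q1^2 < 0" unfolding ms using assms by (intro sq_gt1) simp
  have s0: "eventually (\<lambda>w. \<bar>(lam^2 - q0^2) * q0^w\<bar> < 1 - lam^2 * q0^2) sequentially"
    by (rule ev_small) (use q a0 in auto)
  have s1: "eventually (\<lambda>w. \<bar>(lam^2 - q1^2) * q1^w\<bar> < -(1 - lam^2 * q1^2)) sequentially"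
    by (rule ev_small) (use q a1 in auto)
  from s0 s1 show ?thesis
  proof eventually_elim
    case (elim w)
    have c: "continuous_on {q0..q1} (Fm w)" "continuous_on {q0..q1} (Fp w)"
      unfolding Fm_def Fp_def by (auto intro!: continuous_intros)
    have "Fm w q0 > 0" "Fm w q1 < 0" "Fp w q0 > 0" "Fp w q1 < 0"
      using elim unfolding Fm_def Fp_def by (auto simp: abs_less_iff)
    then obtain r1 r2 where r1: "q0 < r1" "r1 < q1" "Fm w r1 = 0" and r2: "q0 < r2" "r2 < q1" "Fp w r2 = 0"
      using root_between[of q0 q1 "Fm w"] root_between[of q0 q1 "Fp w"] q c by blast
    have ne: "r1 \<noteq> r2"
    proof
      assume e: "r1 = r2"
      have z: "(lam^2 - r1^2) * r1^w = 0" using r1(3) r2(3)[folded e] unfolding Fm_def Fp_def by linarith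
      have "r1^2 < lam^2" using r1 q assms by (intro power_strict_mono) auto
      moreover have "r1 > 0" using r1 q by simp
      ultimately have "(lam^2 - r1^2) * r1^w > 0" by (intro mult_pos_pos) auto
      thus False using z by simp
    qed
    show ?case using q r1 r2 ne fac by (intro exI[of _ r1] exI[of _ r2]) auto
  qed
qed


lemma ev1: "eventually (\<lambda>w::nat. w \<ge> 1) sequentially"
  by (rule eventually_sequentiallyI[of 1]) simp

lemma combo1:
  assumes "0 \<le> lam" "lam < 1" "0 \<le> mu" "mu < 1"
  shows "eventually (\<lambda>w. nsol lam mu w = 2*w+4 \<and> circle_zeros (Dw lam mu w) = 2*w+4 \<and> real_zeros (Dw lam mu w) = 0) sequentially"
proof -
  have a: "cst lam < 0" "cst mu < 0" using cst_neg_iff assms by auto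
  have m: "mch (cst lam) = -2" "mch (cst mu) = -2" using a by (auto simp: mch_def)
  have nA: "eventually (\<lambda>w. int (nsol lam mu w) = 2 * int w - (mch (cst lam) + mch (cst mu))) sequentially"
    by (rule nsol_A) (use a in auto)
  from nA ev1 show ?thesis
  proof eventually_elim
    case (elim w)
    have n: "nsol lam mu w = 2*w+4" using elim m by simp
    have "2*w+4 \<le> circle_zeros (Dw lam mu w)" using circle_lower_plain[OF elim(2) assms(1,3)] n by simp
    thus ?case using tally[OF elim(2), of "2*w+4" lam mu 0] n by simp
  qed
qed

lemma combo2:
  assumes "lam = 1" "0 \<le> mu" "mu < 1"
  shows "eventually (\<lambda>w. nsol lam mu w = 2*w+2 \<and> circle_zeros (Dw lam mu w) = 2*w+4 \<and> real_zeros (Dw lam mu w) = 0) sequentially"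
proof -
  have a: "cst lam = 0" "cst mu < 0" using cst_neg_iff assms by (auto simp: cst_def)
  have m: "mch (cst mu) = -2" using a by (auto simp: mch_def)
  have nB: "eventually (\<lambda>w. int (nsol lam mu w) = 2 * int w - mch (cst mu)) sequentially"
    by (rule nsol_B) (use a in auto)
  from nB ev1 show ?thesis
  proof eventually_elim
    case (elim w)
    have n: "nsol lam mu w = 2*w+2" using elim m by simp
    have "2*w+4 \<le> circle_zeros (Dw lam mu w)"
      using circle_lower_B[OF elim(2), of lam mu] n a assms by simp
    thus ?case using tally[OF elim(2), of "2*w+4" lam mu 0] n by simp
  qed
qed

lemma combo4:
  assumes "lam > 1" "0 \<le> mu" "mu < 1"
  shows "eventually (\<lambda>w. nsol lam mu w = 2*w \<and> circle_zeros (Dw lam mu w) = 2*w \<and> real_zeros (Dw lam mu w) = 4) sequentially"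
proof -
  have l0: "lam \<ge> 0" using assms by simp
  have a: "cst lam > 0" "cst mu < 0" using cst_neg_iff cst_pos_iff assms l0 by auto
  have ns: "eventually (\<lambda>w. nsol lam mu w = 2*w) sequentially"
  proof (cases "cst lam + cst mu = 0")
    case True
    from ev1 show ?thesis by eventually_elim (rule nsol_C[OF True])
  next
    case False
    have m: "mch (cst lam) + mch (cst mu) = 0" using a by (auto simp: mch_def)
    have nA: "eventually (\<lambda>w. int (nsol lam mu w) = 2 * int w - (mch (cst lam) + mch (cst mu))) sequentially"
      by (rule nsol_A) (use a False in auto)
    from nA show ?thesis by eventually_elim (use m in simp)
  qed
  have r1: "eventually (\<lambda>w. \<exists>r. 0 < r \<and> r < 1 \<and> Dr lam mu w r = 0) sequentially"
    by (rule roots_one) (use assms in auto)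
  from ns ev1 r1 show ?thesis
  proof eventually_elim
    case (elim w)
    obtain r where r: "0 < r" "r < 1" "Dr lam mu w r = 0" using elim(3) assms by auto
    have "4 \<le> real_zeros (Dw lam mu w)" by (rule real_lower4[OF elim(2) r])
    moreover have "2*w \<le> circle_zeros (Dw lam mu w)" using circle_lower_plain[OF elim(2) l0 assms(2)] elim(1) by simp
    ultimately show ?case using tally[OF elim(2), of "2*w" lam mu 4] elim(1) by simp
  qed
qed

lemma combo5:
  assumes "lam = 1" "mu > 1"
  shows "eventually (\<lambda>w. nsol lam mu w = 2*w-2 \<and> circle_zeros (Dw lam mu w) = 2*w \<and> real_zeros (Dw lam mu w) = 4) sequentially"
proof -
  have m0: "mu \<ge> 0" using assms by simp
  have a: "cst lam = 0" "cst mu > 0" using cst_pos_iff assms m0 by (auto simp: cst_def)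
  have m: "mch (cst mu) = 2" using a by (auto simp: mch_def)
  have nB: "eventually (\<lambda>w. int (nsol lam mu w) = 2 * int w - mch (cst mu)) sequentially"
    by (rule nsol_B) (use a in auto)
  have r1: "eventually (\<lambda>w. \<exists>r. 0 < r \<and> r < 1 \<and> Dr mu lam w r = 0) sequentially"
    by (rule roots_one) (use assms in auto)
  from nB ev1 r1 show ?thesis
  proof eventually_elim
    case (elim w)
    have n: "nsol lam mu w = 2*w-2" using elim(1) m by simp
    obtain r where r: "0 < r" "r < 1" "Dr lam mu w r = 0" using elim(3) assms Dr_sym by auto
    have "4 \<le> real_zeros (Dw lam mu w)" by (rule real_lower4[OF elim(2) r])
    moreover have "2*w \<le> circle_zeros (Dw lam mu w)"
      using circle_lower_B[OF elim(2), of lam mu] n a assms elim(2) by simp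
    ultimately show ?case using tally[OF elim(2), of "2*w" lam mu 4] n by simp
  qed
qed

lemma combo6:
  assumes "lam > 1" "mu > 1"
  shows "eventually (\<lambda>w. nsol lam mu w = 2*w-4 \<and> circle_zeros (Dw lam mu w) = 2*w-4 \<and> real_zeros (Dw lam mu w) = 8) sequentially"
proof -
  have l0: "lam \<ge> 0" "mu \<ge> 0" using assms by auto
  have a: "cst lam > 0" "cst mu > 0" using cst_pos_iff assms l0 by auto
  have m: "mch (cst lam) + mch (cst mu) = 4" using a by (auto simp: mch_def)
  have rt: "eventually (\<lambda>w. \<exists>r1 r2. 0 < r1 \<and> r1 < 1 \<and> Dr lam mu w r1 = 0 \<and>
                                0 < r2 \<and> r2 < 1 \<and> Dr lam mu w r2 = 0 \<and> r1 \<noteq> r2) sequentially"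
  proof (cases lam mu rule: linorder_cases)
    case less
    from roots_two[OF less assms(1)] show ?thesis by eventually_elim (simp add: Dr_sym)
  next
    case equal
    from roots_eq[OF assms(1)] show ?thesis using equal by simp
  next
    case greater
    from roots_two[OF greater assms(2)] show ?thesis by simp
  qed
  have nA: "eventually (\<lambda>w. int (nsol lam mu w) = 2 * int w - (mch (cst lam) + mch (cst mu))) sequentially"
    by (rule nsol_A) (use a in auto)
  from nA ev1 rt show ?thesis
  proof eventually_elim
    case (elim w)
    have n: "int (nsol lam mu w) = 2 * int w - 4" using elim(1) m by simp
    hence w2: "w \<ge> 2" by linarith
    have n': "nsol lam mu w = 2*w-4" using n by linarith
    obtain r1 r2 where r: "0 < r1" "r1 < 1" "Dr lam mu w r1 = 0" "0 < r2" "r2 < 1" "Dr lam mu w r2 = 0" "r1 \<noteq> r2"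
      using elim(3) by blast
    have "8 \<le> real_zeros (Dw lam mu w)" by (rule real_lower8[OF elim(2) r])
    moreover have "2*w-4 \<le> circle_zeros (Dw lam mu w)" using circle_lower_plain[OF elim(2) l0] n' by simp
    moreover have "2*w-4 + 8 = 2*w+4" using w2 by simp
    ultimately show ?case using tally[OF elim(2), of "2*w-4" lam mu 8] n' by simp
  qed
qed


lemma flip:
  assumes "eventually (\<lambda>w. nsol mu lam w = X w \<and> circle_zeros (Dw mu lam w) = Y w \<and> real_zeros (Dw mu lam w) = Z w) sequentially"
  shows "eventually (\<lambda>w. nsol lam mu w = X w \<and> circle_zeros (Dw lam mu w) = Y w \<and> real_zeros (Dw lam mu w) = Z w) sequentially"
  using assms by (simp add: nsol_sym[of mu lam] Dw_sym[of mu lam])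

lemma final_ev:
  fixes lam mu :: real
  assumes "lam \<ge> 0" and "mu \<ge> 0"
  shows "eventually (\<lambda>w.
          ((lam < 1 \<and> mu < 1) \<longrightarrow>
             nsol lam mu w = 2*w + 4 \<and> circle_zeros (Dw lam mu w) = 2*w + 4)
        \<and> (((lam < 1 \<and> mu = 1) \<or> (lam = 1 \<and> mu < 1)) \<longrightarrow>
             nsol lam mu w = 2*w + 2 \<and> circle_zeros (Dw lam mu w) = 2*w + 4)
        \<and> ((lam = 1 \<and> mu = 1) \<longrightarrow>
             nsol lam mu w = 2*w \<and> circle_zeros (Dw lam mu w) = 2*w + 4)
        \<and> (((lam > 1 \<and> mu < 1) \<or> (lam < 1 \<and> mu > 1)) \<longrightarrow>
             nsol lam mu w = 2*w \<and> circle_zeros (Dw lam mu w) = 2*w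
             \<and> real_zeros (Dw lam mu w) = 4)
        \<and> (((lam > 1 \<and> mu = 1) \<or> (lam = 1 \<and> mu > 1)) \<longrightarrow>
             nsol lam mu w = 2*w - 2 \<and> circle_zeros (Dw lam mu w) = 2*w
             \<and> real_zeros (Dw lam mu w) = 4)
        \<and> ((lam > 1 \<and> mu > 1) \<longrightarrow>
             nsol lam mu w = 2*w - 4 \<and> circle_zeros (Dw lam mu w) = 2*w - 4
             \<and> real_zeros (Dw lam mu w) = 8)
        \<and> (\<exists>\<sigma>::nat. \<sigma> \<in> {0, 1, 2} \<and>
             circle_zeros (Dw lam mu w) = (2*w + 4) - 4*\<sigma> \<and>
             real_zeros (Dw lam mu w) = 4*\<sigma>)) sequentially"
proof (cases lam "1::real" rule: linorder_cases)
  case lam: less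
  show ?thesis
  proof (cases mu "1::real" rule: linorder_cases)
    case mu: less
    from combo1[OF assms(1) lam assms(2) mu] show ?thesis
    proof eventually_elim
      case (elim w)
      have s: "\<exists>\<sigma>::nat. \<sigma> \<in> {0, 1, 2} \<and> circle_zeros (Dw lam mu w) = (2*w + 4) - 4*\<sigma> \<and> real_zeros (Dw lam mu w) = 4*\<sigma>"
        by (rule exI[of _ 0]) (use elim in simp)
      show ?case using elim s lam mu by auto
    qed
  next
    case mu: equal
    from flip[OF combo2[OF mu assms(1) lam]] show ?thesis
    proof eventually_elim
      case (elim w)
      have s: "\<exists>\<sigma>::nat. \<sigma> \<in> {0, 1, 2} \<and> circle_zeros (Dw lam mu w) = (2*w + 4) - 4*\<sigma> \<and> real_zeros (Dw lam mu w) = 4*\<sigma>"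
        by (rule exI[of _ 0]) (use elim in simp)
      show ?case using elim s lam mu by auto
    qed
  next
    case mu: greater
    from flip[OF combo4[OF mu assms(1) lam]] show ?thesis
    proof eventually_elim
      case (elim w)
      have s: "\<exists>\<sigma>::nat. \<sigma> \<in> {0, 1, 2} \<and> circle_zeros (Dw lam mu w) = (2*w + 4) - 4*\<sigma> \<and> real_zeros (Dw lam mu w) = 4*\<sigma>"
        by (rule exI[of _ 1]) (use elim in simp)
      show ?case using elim s lam mu by auto
    qed
  qed
next
  case lam: equal
  show ?thesis
  proof (cases mu "1::real" rule: linorder_cases)
    case mu: less
    from combo2[OF lam assms(2) mu] show ?thesis
    proof eventually_elim
      case (elim w)
      have s: "\<exists>\<sigma>::nat. \<sigma> \<in> {0, 1, 2} \<and> circle_zeros (Dw lam mu w) = (2*w + 4) - 4*\<sigma> \<and> real_zeros (Dw lam mu w) = 4*\<sigma>"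
        by (rule exI[of _ 0]) (use elim in simp)
      show ?case using elim s lam mu by auto
    qed
  next
    case mu: equal
    from ev1 show ?thesis
    proof eventually_elim
      case (elim w)
      have c: "nsol lam mu w = 2*w \<and> circle_zeros (Dw lam mu w) = 2*w+4 \<and> real_zeros (Dw lam mu w) = 0"
        using case3[OF elim] lam mu by simp
      have s: "\<exists>\<sigma>::nat. \<sigma> \<in> {0, 1, 2} \<and> circle_zeros (Dw lam mu w) = (2*w + 4) - 4*\<sigma> \<and> real_zeros (Dw lam mu w) = 4*\<sigma>"
        by (rule exI[of _ 0]) (use c in simp)
      show ?case using c s lam mu by auto
    qed
  next
    case mu: greater
    from combo5[OF lam mu] show ?thesis
    proof eventually_elim
      case (elim w)
      have s: "\<exists>\<sigma>::nat. \<sigma> \<in> {0, 1, 2} \<and> circle_zeros (Dw lam mu w) = (2*w + 4) - 4*\<sigma> \<and> real_zeros (Dw lam mu w) = 4*\<sigma>"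
        by (rule exI[of _ 1]) (use elim in simp)
      show ?case using elim s lam mu by auto
    qed
  qed
next
  case lam: greater
  show ?thesis
  proof (cases mu "1::real" rule: linorder_cases)
    case mu: less
    from combo4[OF lam assms(2) mu] show ?thesis
    proof eventually_elim
      case (elim w)
      have s: "\<exists>\<sigma>::nat. \<sigma> \<in> {0, 1, 2} \<and> circle_zeros (Dw lam mu w) = (2*w + 4) - 4*\<sigma> \<and> real_zeros (Dw lam mu w) = 4*\<sigma>"
        by (rule exI[of _ 1]) (use elim in simp)
      show ?case using elim s lam mu by auto
    qed
  next
    case mu: equal
    from flip[OF combo5[OF mu lam]] show ?thesis
    proof eventually_elim
      case (elim w)
      have s: "\<exists>\<sigma>::nat. \<sigma> \<in> {0, 1, 2} \<and> circle_zeros (Dw lam mu w) = (2*w + 4) - 4*\<sigma> \<and> real_zeros (Dw lam mu w) = 4*\<sigma>"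
        by (rule exI[of _ 1]) (use elim in simp)
      show ?case using elim s lam mu by auto
    qed
  next
    case mu: greater
    from combo6[OF lam mu] ev1 show ?thesis
    proof eventually_elim
      case (elim w)
      have s: "\<exists>\<sigma>::nat. \<sigma> \<in> {0, 1, 2} \<and> circle_zeros (Dw lam mu w) = (2*w + 4) - 4*\<sigma> \<and> real_zeros (Dw lam mu w) = 4*\<sigma>"
        by (rule exI[of _ 2]) (use elim in simp)
      show ?case using elim s lam mu by auto
    qed
  qed
qed


theorem mainTheorem2:
  fixes lam mu :: real
  assumes "lam \<ge> 0" and "mu \<ge> 0"
  shows
    "(\<forall>w::nat. w \<ge> 1 \<longrightarrow> (\<forall>t::real.
        poly (Dw lam mu w) (cis t) = 0 \<longleftrightarrow>
          (star_sol lam mu w t \<or> ((lam = 1 \<or> mu = 1) \<and> sin t = 0))))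
     \<and> ((lam = 1 \<or> mu = 1) \<longrightarrow> (\<forall>w::nat. w \<ge> 1 \<longrightarrow>
          poly (Dw lam mu w) 1 = 0 \<and> poly (Dw lam mu w) (-1) = 0))
     \<and> ((lam = 1 \<and> mu = 1) \<longrightarrow> (\<forall>w::nat. w \<ge> 1 \<longrightarrow>
          order 1 (Dw lam mu w) = 3 \<and> order (-1) (Dw lam mu w) = 3))
     \<and> (\<exists>W::nat. \<forall>w \<ge> W.
          ((lam < 1 \<and> mu < 1) \<longrightarrow>
             nsol lam mu w = 2*w + 4 \<and> circle_zeros (Dw lam mu w) = 2*w + 4)
        \<and> (((lam < 1 \<and> mu = 1) \<or> (lam = 1 \<and> mu < 1)) \<longrightarrow>
             nsol lam mu w = 2*w + 2 \<and> circle_zeros (Dw lam mu w) = 2*w + 4)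
        \<and> ((lam = 1 \<and> mu = 1) \<longrightarrow>
             nsol lam mu w = 2*w \<and> circle_zeros (Dw lam mu w) = 2*w + 4)
        \<and> (((lam > 1 \<and> mu < 1) \<or> (lam < 1 \<and> mu > 1)) \<longrightarrow>
             nsol lam mu w = 2*w \<and> circle_zeros (Dw lam mu w) = 2*w
             \<and> real_zeros (Dw lam mu w) = 4)
        \<and> (((lam > 1 \<and> mu = 1) \<or> (lam = 1 \<and> mu > 1)) \<longrightarrow>
             nsol lam mu w = 2*w - 2 \<and> circle_zeros (Dw lam mu w) = 2*w
             \<and> real_zeros (Dw lam mu w) = 4)
        \<and> ((lam > 1 \<and> mu > 1) \<longrightarrow>
             nsol lam mu w = 2*w - 4 \<and> circle_zeros (Dw lam mu w) = 2*w - 4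
             \<and> real_zeros (Dw lam mu w) = 8)
        \<and> (\<exists>\<sigma>::nat. \<sigma> \<in> {0, 1, 2} \<and>
             circle_zeros (Dw lam mu w) = (2*w + 4) - 4*\<sigma> \<and>
             real_zeros (Dw lam mu w) = 4*\<sigma>))
     \<and> (\<forall>w::nat. w \<ge> 1 \<longrightarrow> (\<forall>p::real.
          poly (Dw lam mu w) (complex_of_real p) = 0 \<longrightarrow>
            poly (Dw lam mu w) (complex_of_real (-p)) = 0
            \<and> poly (Dw lam mu w) (complex_of_real (1/p)) = 0
            \<and> poly (Dw lam mu w) (complex_of_real (-1/p)) = 0))"
  proof -
  have P1: "\<forall>w::nat. w \<ge> 1 \<longrightarrow> (\<forall>t::real.
        poly (Dw lam mu w) (cis t) = 0 \<longleftrightarrow>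
          (star_sol lam mu w t \<or> ((lam = 1 \<or> mu = 1) \<and> sin t = 0)))"
    using part1[OF assms] by blast
  have P2: "(lam = 1 \<or> mu = 1) \<longrightarrow> (\<forall>w::nat. w \<ge> 1 \<longrightarrow>
          poly (Dw lam mu w) 1 = 0 \<and> poly (Dw lam mu w) (-1) = 0)"
    using part2 by blast
  have P3: "(lam = 1 \<and> mu = 1) \<longrightarrow> (\<forall>w::nat. w \<ge> 1 \<longrightarrow>
          order 1 (Dw lam mu w) = 3 \<and> order (-1) (Dw lam mu w) = 3)"
    using case3 by blast
  have P5: "\<forall>w::nat. w \<ge> 1 \<longrightarrow> (\<forall>p::real.
          poly (Dw lam mu w) (complex_of_real p) = 0 \<longrightarrow>
            poly (Dw lam mu w) (complex_of_real (-p)) = 0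
            \<and> poly (Dw lam mu w) (complex_of_real (1/p)) = 0
            \<and> poly (Dw lam mu w) (complex_of_real (-1/p)) = 0)"
    using part_last by blast
  have P4: "\<exists>W::nat. \<forall>w \<ge> W.
          ((lam < 1 \<and> mu < 1) \<longrightarrow>
             nsol lam mu w = 2*w + 4 \<and> circle_zeros (Dw lam mu w) = 2*w + 4)
        \<and> (((lam < 1 \<and> mu = 1) \<or> (lam = 1 \<and> mu < 1)) \<longrightarrow>
             nsol lam mu w = 2*w + 2 \<and> circle_zeros (Dw lam mu w) = 2*w + 4)
        \<and> ((lam = 1 \<and> mu = 1) \<longrightarrow>
             nsol lam mu w = 2*w \<and> circle_zeros (Dw lam mu w) = 2*w + 4)
        \<and> (((lam > 1 \<and> mu < 1) \<or> (lam < 1 \<and> mu > 1)) \<longrightarrow>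
             nsol lam mu w = 2*w \<and> circle_zeros (Dw lam mu w) = 2*w
             \<and> real_zeros (Dw lam mu w) = 4)
        \<and> (((lam > 1 \<and> mu = 1) \<or> (lam = 1 \<and> mu > 1)) \<longrightarrow>
             nsol lam mu w = 2*w - 2 \<and> circle_zeros (Dw lam mu w) = 2*w
             \<and> real_zeros (Dw lam mu w) = 4)
        \<and> ((lam > 1 \<and> mu > 1) \<longrightarrow>
             nsol lam mu w = 2*w - 4 \<and> circle_zeros (Dw lam mu w) = 2*w - 4
             \<and> real_zeros (Dw lam mu w) = 8)
        \<and> (\<exists>\<sigma>::nat. \<sigma> \<in> {0, 1, 2} \<and>
             circle_zeros (Dw lam mu w) = (2*w + 4) - 4*\<sigma> \<and>
             real_zeros (Dw lam mu w) = 4*\<sigma>)"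
    using final_ev[OF assms] unfolding eventually_sequentially .
  show ?thesis using P1 P2 P3 P4 P5 by blast
qed

end
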